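(* Let $G,H$ be finite simple graphs and $T:G\to G$, $S:H\to H$ graph endomorphisms. Then the map $T*S:V(G)\times V(H)\to V(G)\times V(H)$, $(v,w)\mapsto(T(v),S(w))$, is a graph endomorphism of $G*H$, and the Lefschetz numbers satisfy $$L(G*H,T*S)=L(G,T)\,L(H,S).$$
   Context: A graph endomorphism of a finite simple graph $G$ is a map $T:V(G)\to V(G)$ such that for adjacent vertices $u,v$, the images $T(u),T(v)$ are equal or adjacent; it therefore maps complete subgraphs to complete subgraphs and induces a simplicial map of the clique (Whitney) complex of $G$ (the simplicial complex of vertex sets of complete subgraphs). The Lefschetz number is $L(G,T)=\sum_{p\ge0}(-1)^p\,\mathrm{tr}\big(T^*\,|\,H^p(G)\big)$, where $H^p(G)$ is the $p$-th simplicial cohomology with real coefficients of the clique complex of $G$ (equivalently the kernel of the Hodge Laplacian on $p$-forms). The strong product $G*H$ has vertex set $V(G)\times V(H)$, two distinct vertices $(a,b),(c,d)$ being adjacent iff ($a=c$ or $a\sim c$ in $G$) and ($b=d$ or $b\sim d$ in $H$). *)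

theory Defs
  imports Complex_Main
begin

definition simple_graph :: "'a set \<Rightarrow> ('a \<Rightarrow> 'a \<Rightarrow> bool) \<Rightarrow> bool" where
  "simple_graph V E \<longleftrightarrow> finite V \<and> (\<forall>x y. E x y \<longrightarrow> x \<in> V \<and> y \<in> V)
     \<and> (\<forall>x y. E x y \<longrightarrow> E y x) \<and> (\<forall>x. \<not> E x x)"

definition graph_endo :: "'a set \<Rightarrow> ('a \<Rightarrow> 'a \<Rightarrow> bool) \<Rightarrow> ('a \<Rightarrow> 'a) \<Rightarrow> bool" where
  "graph_endo V E T \<longleftrightarrow> T ` V \<subseteq> V \<and>
     (\<forall>u\<in>V. \<forall>v\<in>V. E u v \<longrightarrow> T u = T v \<or> E (T u) (T v))"

definition strong_prod :: "('a \<Rightarrow> 'a \<Rightarrow> bool) \<Rightarrow> ('b \<Rightarrow> 'b \<Rightarrow> bool) \<Rightarrow> 'a \<times> 'b \<Rightarrow> 'a \<times> 'b \<Rightarrow> bool" where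
  "strong_prod E F = (\<lambda>(a, b) (c, d). (a, b) \<noteq> (c, d) \<and> (a = c \<or> E a c) \<and> (b = d \<or> F b d))"

text \<open>Simplices of the clique (Whitney) complex: nonempty vertex sets of complete subgraphs.\<close>
definition clique :: "'a set \<Rightarrow> ('a \<Rightarrow> 'a \<Rightarrow> bool) \<Rightarrow> 'a set \<Rightarrow> bool" where
  "clique V E s \<longleftrightarrow> s \<noteq> {} \<and> s \<subseteq> V \<and> (\<forall>x\<in>s. \<forall>y\<in>s. x \<noteq> y \<longrightarrow> E x y)"

definition osimplex :: "'a set \<Rightarrow> ('a \<Rightarrow> 'a \<Rightarrow> bool) \<Rightarrow> nat \<Rightarrow> 'a list \<Rightarrow> bool" where
  "osimplex V E p xs \<longleftrightarrow> length xs = Suc p \<and> distinct xs \<and> clique V E (set xs)"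

text \<open>Real p-cochains: alternating real functions on ordered p-simplices.\<close>
definition cochains :: "'a set \<Rightarrow> ('a \<Rightarrow> 'a \<Rightarrow> bool) \<Rightarrow> nat \<Rightarrow> ('a list \<Rightarrow> real) set" where
  "cochains V E p = {f. (\<forall>xs. \<not> osimplex V E p xs \<longrightarrow> f xs = 0) \<and>
     (\<forall>xs i. Suc i < length xs \<longrightarrow> f (xs[i := xs ! Suc i, Suc i := xs ! i]) = - f xs)}"

definition del_nth :: "nat \<Rightarrow> 'a list \<Rightarrow> 'a list" where
  "del_nth i xs = take i xs @ drop (Suc i) xs"

definition coboundary :: "'a set \<Rightarrow> ('a \<Rightarrow> 'a \<Rightarrow> bool) \<Rightarrow> nat \<Rightarrow> ('a list \<Rightarrow> real) \<Rightarrow> 'a list \<Rightarrow> real" where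
  "coboundary V E p f xs = (if osimplex V E (Suc p) xs
      then (\<Sum>i<length xs. (-1) ^ i * f (del_nth i xs)) else 0)"

definition pullback :: "'a set \<Rightarrow> ('a \<Rightarrow> 'a \<Rightarrow> bool) \<Rightarrow> nat \<Rightarrow> ('a \<Rightarrow> 'a) \<Rightarrow> ('a list \<Rightarrow> real) \<Rightarrow> 'a list \<Rightarrow> real" where
  "pullback V E p T f xs = (if osimplex V E p xs then f (map T xs) else 0)"

definition cocycles :: "'a set \<Rightarrow> ('a \<Rightarrow> 'a \<Rightarrow> bool) \<Rightarrow> nat \<Rightarrow> ('a list \<Rightarrow> real) set" where
  "cocycles V E p = {f \<in> cochains V E p. coboundary V E p f = (\<lambda>_. 0)}"

definition coboundaries :: "'a set \<Rightarrow> ('a \<Rightarrow> 'a \<Rightarrow> bool) \<Rightarrow> nat \<Rightarrow> ('a list \<Rightarrow> real) set" where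
  "coboundaries V E p = (case p of 0 \<Rightarrow> {\<lambda>_. 0}
      | Suc q \<Rightarrow> coboundary V E q ` cochains V E q)"

definition lincomb :: "(('b \<Rightarrow> real) \<Rightarrow> real) \<Rightarrow> ('b \<Rightarrow> real) set \<Rightarrow> 'b \<Rightarrow> real" where
  "lincomb a B = (\<lambda>x. \<Sum>b\<in>B. a b * b x)"

text \<open>Trace of the linear map induced by g on the quotient space K / I, computed in a
  basis of K / I given by representatives B.\<close>
definition quot_trace :: "('b \<Rightarrow> real) set \<Rightarrow> ('b \<Rightarrow> real) set \<Rightarrow> (('b \<Rightarrow> real) \<Rightarrow> ('b \<Rightarrow> real)) \<Rightarrow> real" where
  "quot_trace K I g = (THE t. \<exists>B c. finite B \<and> B \<subseteq> K
      \<and> (\<forall>a. lincomb a B \<in> I \<longrightarrow> (\<forall>b\<in>B. a b = 0))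
      \<and> (\<forall>k\<in>K. \<exists>a. (\<lambda>x. k x - lincomb a B x) \<in> I)
      \<and> (\<forall>b\<in>B. (\<lambda>x. g b x - lincomb (c b) B x) \<in> I)
      \<and> t = (\<Sum>b\<in>B. c b b))"

text \<open>Trace of T^* on H^p(G) = Z^p / B^p (real simplicial cohomology of the clique complex).\<close>
definition cohom_trace :: "'a set \<Rightarrow> ('a \<Rightarrow> 'a \<Rightarrow> bool) \<Rightarrow> ('a \<Rightarrow> 'a) \<Rightarrow> nat \<Rightarrow> real" where
  "cohom_trace V E T p = quot_trace (cocycles V E p) (coboundaries V E p) (pullback V E p T)"

text \<open>Lefschetz number; H^p = 0 for p \<ge> card V, so the sum is the full alternating sum.\<close>
definition lefschetz :: "'a set \<Rightarrow> ('a \<Rightarrow> 'a \<Rightarrow> bool) \<Rightarrow> ('a \<Rightarrow> 'a) \<Rightarrow> real" where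
  "lefschetz V E T = (\<Sum>p\<le>card V. (-1) ^ p * cohom_trace V E T p)"

end

theory Submission
  imports Defs "HOL-Library.Function_Algebras" "HOL-Combinatorics.Cycles"
begin


section \<open>Linear algebra on real-valued functions\<close>

definition sc :: "real \<Rightarrow> ('b \<Rightarrow> real) \<Rightarrow> 'b \<Rightarrow> real" where
  "sc r f = (\<lambda>x. r * f x)"

lemma sc_apply [simp]: "sc r f x = r * f x" by (simp add: sc_def)

interpretation VS: vector_space "sc :: real \<Rightarrow> ('b \<Rightarrow> real) \<Rightarrow> 'b \<Rightarrow> real"
  by unfold_locales (auto simp: fun_eq_iff algebra_simps)

lemma sum_fun_apply: "(\<Sum>b\<in>B. (F b :: 'x \<Rightarrow> 'y::comm_monoid_add)) x = (\<Sum>b\<in>B. F b x)"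
  by (induction B rule: infinite_finite_induct) auto

lemma lincomb_sum: "lincomb a B = (\<Sum>b\<in>B. sc (a b) b)"
  by (simp add: lincomb_def fun_eq_iff sum_fun_apply)

definition lin :: "(('b \<Rightarrow> real) \<Rightarrow> ('c \<Rightarrow> real)) \<Rightarrow> bool" where
  "lin g \<longleftrightarrow> (\<forall>f h. g (f + h) = g f + g h) \<and> (\<forall>r f. g (sc r f) = sc r (g f))"

definition subsp :: "('b \<Rightarrow> real) set \<Rightarrow> bool" where
  "subsp I \<longleftrightarrow> 0 \<in> I \<and> (\<forall>x\<in>I. \<forall>y\<in>I. x + y \<in> I) \<and> (\<forall>r. \<forall>x\<in>I. sc r x \<in> I)"

lemma subsp_VS: "subsp I = VS.subspace I"
  by (simp add: subsp_def VS.subspace_def)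

lemma lin_0: "lin g \<Longrightarrow> g 0 = 0"
  unfolding lin_def by (metis add_cancel_right_right)

lemma lin_diff: "lin g \<Longrightarrow> g (f - h) = g f - g h"
proof -
  assume "lin g"
  hence "g (f - h) + g h = g f" unfolding lin_def by (metis diff_add_cancel)
  thus ?thesis by (metis add_diff_cancel)
qed

lemma lin_sum: "lin g \<Longrightarrow> g (\<Sum>b\<in>B. sc (a b) (h b)) = (\<Sum>b\<in>B. sc (a b) (g (h b)))"
  by (induction B rule: infinite_finite_induct) (auto simp: lin_0 lin_def)

lemma subsp_0: "subsp I \<Longrightarrow> 0 \<in> I" by (simp add: subsp_def)
lemma subsp_add: "subsp I \<Longrightarrow> x \<in> I \<Longrightarrow> y \<in> I \<Longrightarrow> x + y \<in> I" by (simp add: subsp_def)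
lemma subsp_sc: "subsp I \<Longrightarrow> x \<in> I \<Longrightarrow> sc r x \<in> I" by (simp add: subsp_def)
lemma subsp_uminus: "subsp I \<Longrightarrow> x \<in> I \<Longrightarrow> - x \<in> I"
proof -
  assume "subsp I" "x \<in> I"
  hence "sc (-1) x \<in> I" unfolding subsp_def by blast
  moreover have "sc (-1) x = - x" by (simp add: fun_eq_iff)
  ultimately show ?thesis by simp
qed
lemma subsp_diff: "subsp I \<Longrightarrow> x \<in> I \<Longrightarrow> y \<in> I \<Longrightarrow> x - y \<in> I"
  by (metis diff_conv_add_uminus subsp_add subsp_uminus)
lemma subsp_sum: "subsp I \<Longrightarrow> (\<And>b. b \<in> B \<Longrightarrow> h b \<in> I) \<Longrightarrow> (\<Sum>b\<in>B. h b) \<in> I"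
  by (induction B rule: infinite_finite_induct) (auto simp: subsp_0 subsp_add)

definition cg :: "('b \<Rightarrow> real) set \<Rightarrow> ('b \<Rightarrow> real) \<Rightarrow> ('b \<Rightarrow> real) \<Rightarrow> bool" where
  "cg I x y \<longleftrightarrow> x - y \<in> I"

lemma cg_refl: "subsp I \<Longrightarrow> cg I x x" by (simp add: cg_def subsp_0)
lemma cg_sym: "subsp I \<Longrightarrow> cg I x y \<Longrightarrow> cg I y x"
proof -
  assume "subsp I" "cg I x y"
  hence "- (x - y) \<in> I" unfolding cg_def by (rule subsp_uminus)
  thus ?thesis by (simp add: cg_def)
qed
lemma cg_trans: "subsp I \<Longrightarrow> cg I x y \<Longrightarrow> cg I y z \<Longrightarrow> cg I x z"
proof -
  assume "subsp I" "cg I x y" "cg I y z"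
  hence "(x - y) + (y - z) \<in> I" unfolding cg_def by (rule subsp_add)
  thus ?thesis by (simp add: cg_def)
qed
lemma cg_sum: "subsp I \<Longrightarrow> (\<And>b. b \<in> B \<Longrightarrow> cg I (h b) (h' b)) \<Longrightarrow>
   cg I (\<Sum>b\<in>B. sc (a b) (h b)) (\<Sum>b\<in>B. sc (a b) (h' b))"
proof -
  assume I: "subsp I" and h: "\<And>b. b \<in> B \<Longrightarrow> cg I (h b) (h' b)"
  have "(\<Sum>b\<in>B. sc (a b) (h b)) - (\<Sum>b\<in>B. sc (a b) (h' b)) = (\<Sum>b\<in>B. sc (a b) (h b - h' b))"
    by (simp add: fun_eq_iff sum_fun_apply sum_subtractf algebra_simps)
  also have "\<dots> \<in> I" using h I by (intro subsp_sum) (auto simp: cg_def subsp_sc)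
  finally show ?thesis by (simp add: cg_def)
qed
lemma cg_lin: "subsp I \<Longrightarrow> lin g \<Longrightarrow> (\<forall>x\<in>I. g x \<in> I) \<Longrightarrow> cg I x y \<Longrightarrow> cg I (g x) (g y)"
  by (simp add: cg_def lin_diff[symmetric])

lemma sum_sc_sum: "(\<Sum>b\<in>B. sc (a b) (\<Sum>b'\<in>B'. sc (m b b') (h b'))) =
   (\<Sum>b'\<in>B'. sc (\<Sum>b\<in>B. a b * m b b') (h b'))"
  by (simp add: fun_eq_iff sum_fun_apply sum_distrib_left sum_distrib_right mult.assoc)
     (rule allI, rule sum.swap)

definition QB where
  "QB K I g B c \<longleftrightarrow> finite B \<and> B \<subseteq> K
      \<and> (\<forall>a. lincomb a B \<in> I \<longrightarrow> (\<forall>b\<in>B. a b = 0))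
      \<and> (\<forall>k\<in>K. \<exists>a. (\<lambda>x. k x - lincomb a B x) \<in> I)
      \<and> (\<forall>b\<in>B. (\<lambda>x. g b x - lincomb (c b) B x) \<in> I)"

lemma fun_minus_lam: "(\<lambda>x. k x - lincomb a B x) = k - (\<Sum>b\<in>B. sc (a b) b)"
  by (simp add: fun_eq_iff lincomb_def sum_fun_apply)

lemma QB_alt: "QB K I g B c \<longleftrightarrow> finite B \<and> B \<subseteq> K
      \<and> (\<forall>a. (\<Sum>b\<in>B. sc (a b) b) \<in> I \<longrightarrow> (\<forall>b\<in>B. a b = 0))
      \<and> (\<forall>k\<in>K. \<exists>a. cg I k (\<Sum>b\<in>B. sc (a b) b))
      \<and> (\<forall>b\<in>B. cg I (g b) (\<Sum>b2\<in>B. sc (c b b2) b2))"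
  unfolding QB_def fun_minus_lam unfolding lincomb_sum cg_def ..

lemma QB_coord:
  assumes I: "subsp I" and Q: "QB K I g B c"
    and h: "cg I (\<Sum>b\<in>B. sc (a b) b) (\<Sum>b\<in>B. sc (a' b) b)" and b: "b \<in> B"
  shows "a b = a' b"
proof -
  have "(\<Sum>b\<in>B. sc (a b) b) - (\<Sum>b\<in>B. sc (a' b) b) = (\<Sum>b\<in>B. sc (a b - a' b) b)"
    by (simp add: fun_eq_iff sum_fun_apply sum_subtractf algebra_simps)
  with h have "(\<Sum>b\<in>B. sc (a b - a' b) b) \<in> I" by (simp add: cg_def)
  moreover from Q have "\<forall>a. (\<Sum>b\<in>B. sc (a b) b) \<in> I \<longrightarrow> (\<forall>b\<in>B. a b = 0)" unfolding QB_alt by blast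
  ultimately have "\<forall>b\<in>B. (\<lambda>b. a b - a' b) b = 0" by (metis (no_types))
  hence "a b - a' b = 0" using b by simp
  thus ?thesis by simp
qed

lemma sum_sc_delta: "finite B \<Longrightarrow> b \<in> B \<Longrightarrow> (\<Sum>b2\<in>B. sc (if b2 = b then 1 else 0) b2) = b"
proof -
  assume "finite B" "b \<in> B"
  have "(\<Sum>b2\<in>B. sc (if b2 = b then 1 else 0) b2) = (\<Sum>b2\<in>B. if b2 = b then b2 else 0)"
    by (rule sum.cong) (auto simp: fun_eq_iff)
  also have "\<dots> = b" using \<open>finite B\<close> \<open>b \<in> B\<close> by simp
  finally show ?thesis .
qed

lemma QB_unique:
  assumes I: "subsp I" and g: "lin g" and gI: "\<forall>x\<in>I. g x \<in> I"
    and Q1: "QB K I g B c" and Q2: "QB K I g B' c'"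
  shows "(\<Sum>b\<in>B. c b b) = (\<Sum>b\<in>B'. c' b b)"
proof -
  have fB: "finite B" and BK: "B \<subseteq> K" and sp1: "\<forall>k\<in>K. \<exists>a. cg I k (\<Sum>b\<in>B. sc (a b) b)"
    and gc1: "\<forall>b\<in>B. cg I (g b) (\<Sum>b2\<in>B. sc (c b b2) b2)"
    using Q1 unfolding QB_alt by blast+
  have fB': "finite B'" and BK': "B' \<subseteq> K" and sp2: "\<forall>k\<in>K. \<exists>a. cg I k (\<Sum>b\<in>B'. sc (a b) b)"
    and gc2: "\<forall>b\<in>B'. cg I (g b) (\<Sum>b2\<in>B'. sc (c' b b2) b2)"
    using Q2 unfolding QB_alt by blast+
  note cgt[trans] = cg_trans[OF I]
  have "\<forall>b'\<in>B'. \<exists>a. cg I b' (\<Sum>b\<in>B. sc (a b) b)" using sp1 BK' by blast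
  then obtain M where M: "\<And>b'. b' \<in> B' \<Longrightarrow> cg I b' (\<Sum>b\<in>B. sc (M b' b) b)" by metis
  have "\<forall>b\<in>B. \<exists>a. cg I b (\<Sum>b'\<in>B'. sc (a b') b')" using sp2 BK by blast
  then obtain N where N: "\<And>b. b \<in> B \<Longrightarrow> cg I b (\<Sum>b'\<in>B'. sc (N b b') b')" by metis
  have NM: "(\<Sum>b'\<in>B'. N b b' * M b' b2) = (if b2 = b then 1 else 0)" if b: "b \<in> B" and b2: "b2 \<in> B" for b b2
  proof -
    have "cg I (\<Sum>b2\<in>B. sc (if b2 = b then 1 else 0) b2) (\<Sum>b'\<in>B'. sc (N b b') b')"
      using N[OF b] sum_sc_delta[OF fB b] by simp
    also have "cg I \<dots> (\<Sum>b'\<in>B'. sc (N b b') (\<Sum>b\<in>B. sc (M b' b) b))"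
      using M by (intro cg_sum I) auto
    also have "(\<Sum>b'\<in>B'. sc (N b b') (\<Sum>b\<in>B. sc (M b' b) b)) = (\<Sum>b2\<in>B. sc (\<Sum>b'\<in>B'. N b b' * M b' b2) b2)"
      by (rule sum_sc_sum)
    finally have "cg I (\<Sum>b2\<in>B. sc (if b2 = b then 1 else 0) b2) (\<Sum>b2\<in>B. sc (\<Sum>b'\<in>B'. N b b' * M b' b2) b2)" .
    from QB_coord[OF I Q1 this b2] show ?thesis by simp
  qed
  have C': "c' b' b'' = (\<Sum>b2\<in>B. (\<Sum>b\<in>B. M b' b * c b b2) * N b2 b'')" if b': "b' \<in> B'" and b'': "b'' \<in> B'" for b' b''
  proof -
    have "cg I (\<Sum>b2\<in>B'. sc (c' b' b2) b2) (g b')"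
      using gc2 b' cg_sym[OF I] by blast
    also have "cg I (g b') (g (\<Sum>b\<in>B. sc (M b' b) b))"
      using cg_lin[OF I g gI M[OF b']] .
    also have "g (\<Sum>b\<in>B. sc (M b' b) b) = (\<Sum>b\<in>B. sc (M b' b) (g b))"
      using lin_sum[OF g, of "M b'" id B] by simp
    also have "cg I \<dots> (\<Sum>b\<in>B. sc (M b' b) (\<Sum>b2\<in>B. sc (c b b2) b2))"
      using gc1 I by (intro cg_sum) auto
    also have "(\<Sum>b\<in>B. sc (M b' b) (\<Sum>b2\<in>B. sc (c b b2) b2)) = (\<Sum>b2\<in>B. sc (\<Sum>b\<in>B. M b' b * c b b2) b2)"
      by (rule sum_sc_sum)
    also have "cg I \<dots> (\<Sum>b2\<in>B. sc (\<Sum>b\<in>B. M b' b * c b b2) (\<Sum>b''\<in>B'. sc (N b2 b'') b''))"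
      using N I by (intro cg_sum) auto
    also have "(\<Sum>b2\<in>B. sc (\<Sum>b\<in>B. M b' b * c b b2) (\<Sum>b''\<in>B'. sc (N b2 b'') b'')) =
        (\<Sum>b''\<in>B'. sc (\<Sum>b2\<in>B. (\<Sum>b\<in>B. M b' b * c b b2) * N b2 b'') b'')"
      by (rule sum_sc_sum)
    finally have "cg I (\<Sum>b2\<in>B'. sc (c' b' b2) b2) (\<Sum>b''\<in>B'. sc (\<Sum>b2\<in>B. (\<Sum>b\<in>B. M b' b * c b b2) * N b2 b'') b'')" .
    from QB_coord[OF I Q2 this b''] show ?thesis .
  qed
  have "(\<Sum>b'\<in>B'. c' b' b') = (\<Sum>b'\<in>B'. \<Sum>b2\<in>B. \<Sum>b\<in>B. c b b2 * (N b2 b' * M b' b))"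
    using C' by (intro sum.cong refl) (simp add: sum_distrib_left sum_distrib_right mult_ac)
  also have "\<dots> = (\<Sum>b2\<in>B. \<Sum>b'\<in>B'. \<Sum>b\<in>B. c b b2 * (N b2 b' * M b' b))"
    by (rule sum.swap)
  also have "\<dots> = (\<Sum>b2\<in>B. \<Sum>b\<in>B. \<Sum>b'\<in>B'. c b b2 * (N b2 b' * M b' b))"
    by (rule sum.cong[OF refl]) (rule sum.swap)
  also have "\<dots> = (\<Sum>b2\<in>B. \<Sum>b\<in>B. c b b2 * (\<Sum>b'\<in>B'. N b2 b' * M b' b))"
    by (simp add: sum_distrib_left)
  also have "\<dots> = (\<Sum>b2\<in>B. \<Sum>b\<in>B. c b b2 * (if b = b2 then 1 else 0))"
    by (intro sum.cong refl) (simp add: NM)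
  also have "\<dots> = (\<Sum>b\<in>B. c b b)"
  proof (rule sum.cong[OF refl])
    fix b2 assume "b2 \<in> B"
    have "(\<Sum>b\<in>B. c b b2 * (if b = b2 then 1 else 0)) = (\<Sum>b\<in>B. if b = b2 then c b b2 else 0)"
      by (rule sum.cong) auto
    also have "\<dots> = c b2 b2" using fB \<open>b2 \<in> B\<close> by (simp add: sum.delta)
    finally show "(\<Sum>b\<in>B. c b b2 * (if b = b2 then 1 else 0)) = c b2 b2" .
  qed
  finally show ?thesis by (rule sym)
qed

lemma quot_trace_QB: "quot_trace K I g = (THE t. \<exists>B c. QB K I g B c \<and> t = (\<Sum>b\<in>B. c b b))"
  unfolding quot_trace_def QB_def conj_assoc ..

lemma quot_trace_eqI:
  assumes I: "subsp I" and g: "lin g" and gI: "\<forall>x\<in>I. g x \<in> I" and Q: "QB K I g B c"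
  shows "quot_trace K I g = (\<Sum>b\<in>B. c b b)"
  unfolding quot_trace_QB
proof (rule the_equality)
  show "\<exists>B' c'. QB K I g B' c' \<and> (\<Sum>b\<in>B. c b b) = (\<Sum>b\<in>B'. c' b b)"
    using Q by blast
next
  fix t assume "\<exists>B' c'. QB K I g B' c' \<and> t = (\<Sum>b\<in>B'. c' b b)"
  then obtain B' c' where "QB K I g B' c'" "t = (\<Sum>b\<in>B'. c' b b)" by blast
  with QB_unique[OF I g gI Q] show "t = (\<Sum>b\<in>B. c b b)" by simp
qed


lemma sum_sc_0: "(\<Sum>b\<in>B. sc 0 (h b)) = 0"
  by (simp add: fun_eq_iff sum_fun_apply)

lemma sum_sc_union: "finite B1 \<Longrightarrow> finite B2 \<Longrightarrow> B1 \<inter> B2 = {} \<Longrightarrow>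
  (\<Sum>b\<in>B1 \<union> B2. sc (a b) b) = (\<Sum>b\<in>B1. sc (a b) b) + (\<Sum>b\<in>B2. sc (a b) b)"
  by (rule sum.union_disjoint)

lemma sum_sc_in: "subsp I \<Longrightarrow> B \<subseteq> I \<Longrightarrow> (\<Sum>b\<in>B. sc (a b) b) \<in> I"
  by (intro subsp_sum) (auto intro: subsp_sc)

lemma QB_exists:
  assumes I: "subsp I" and K: "subsp K" and IK: "I \<subseteq> K" and fin: "finite F"
    and KF: "K \<subseteq> VS.span F" and gK: "\<forall>x\<in>K. g x \<in> K"
  shows "\<exists>B c. QB K I g B c"
proof -
  obtain BI where BI: "BI \<subseteq> I" "VS.independent BI" "I \<subseteq> VS.span BI" "card BI = VS.dim I"
    by (rule VS.basis_exists)
  have "BI \<subseteq> K" using BI(1) IK by (rule order_trans)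
  then obtain BK where BK: "BI \<subseteq> BK" "BK \<subseteq> K" "VS.independent BK" "K \<subseteq> VS.span BK"
    using BI(2) by (rule VS.maximal_independent_subset_extend)
  have "BK \<subseteq> VS.span F" using BK(2) KF by (rule order_trans)
  from VS.independent_span_bound[OF fin BK(3) this] have fBK: "finite BK" by simp
  define B where "B = BK - BI"
  have fB: "finite B" and fBI: "finite BI" using fBK BK(1) by (auto simp: B_def intro: finite_subset)
  have BKu: "BK = B \<union> BI" and disj: "B \<inter> BI = {}" using BK(1) by (auto simp: B_def)
  have indepK: "\<forall>v\<in>BK. u v = 0" if "(\<Sum>v\<in>BK. sc (u v) v) = 0" for u
    using BK(3) VS.dependent_finite[OF fBK] that by blast
  have spanK: "\<forall>k\<in>K. \<exists>a. cg I k (\<Sum>b\<in>B. sc (a b) b)"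
  proof
    fix k assume "k \<in> K"
    hence "k \<in> range (\<lambda>u. \<Sum>v\<in>BK. sc (u v) v)"
      using BK(4) VS.span_finite[OF fBK] by blast
    then obtain u where u: "k = (\<Sum>v\<in>BK. sc (u v) v)" by blast
    have "k - (\<Sum>b\<in>B. sc (u b) b) = (\<Sum>v\<in>BI. sc (u v) v)"
      unfolding u BKu using sum_sc_union[OF fB fBI disj, of u] by simp
    also have "\<dots> \<in> I" using I BI(1) by (rule sum_sc_in)
    finally show "\<exists>a. cg I k (\<Sum>b\<in>B. sc (a b) b)" unfolding cg_def by blast
  qed
  have indep: "\<forall>b\<in>B. a b = 0" if h: "(\<Sum>b\<in>B. sc (a b) b) \<in> I" for a
  proof -
    from h BI(3) have "(\<Sum>b\<in>B. sc (a b) b) \<in> VS.span BI" by blast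
    hence "(\<Sum>b\<in>B. sc (a b) b) \<in> range (\<lambda>u. \<Sum>v\<in>BI. sc (u v) v)"
      using VS.span_finite[OF fBI] by blast
    then obtain w where w: "(\<Sum>b\<in>B. sc (a b) b) = (\<Sum>v\<in>BI. sc (w v) v)" by blast
    define u where "u = (\<lambda>v. if v \<in> B then a v else - w v)"
    have "(\<Sum>v\<in>BK. sc (u v) v) = (\<Sum>v\<in>B. sc (u v) v) + (\<Sum>v\<in>BI. sc (u v) v)"
      unfolding BKu by (rule sum_sc_union[OF fB fBI disj])
    also have "(\<Sum>v\<in>B. sc (u v) v) = (\<Sum>v\<in>B. sc (a v) v)"
      by (rule sum.cong) (auto simp: u_def)
    also have "(\<Sum>v\<in>BI. sc (u v) v) = (\<Sum>v\<in>BI. sc (- w v) v)"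
      using disj by (intro sum.cong) (auto simp: u_def)
    also have "\<dots> = - (\<Sum>v\<in>BI. sc (w v) v)"
      by (simp add: fun_eq_iff sum_fun_apply sum_negf)
    also have "(\<Sum>v\<in>B. sc (a v) v) + - (\<Sum>v\<in>BI. sc (w v) v) = 0"
      by (simp only: w add.right_inverse)
    finally have "(\<Sum>v\<in>BK. sc (u v) v) = 0" .
    from indepK[OF this] have "\<forall>v\<in>BK. u v = 0" .
    thus ?thesis using BKu unfolding u_def by force
  qed
  have "\<forall>b\<in>B. \<exists>a. cg I (g b) (\<Sum>b2\<in>B. sc (a b2) b2)"
    using spanK gK BK(2) by (auto simp: B_def)
  from bchoice[OF this] obtain c where c: "\<forall>b\<in>B. cg I (g b) (\<Sum>b2\<in>B. sc (c b b2) b2)" by blast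
  have "QB K I g B c"
    unfolding QB_alt using fB BK(2) indep spanK c by (auto simp: B_def)
  thus ?thesis by blast
qed

lemma QB_zero: "QB {0} {0} g {} (\<lambda>_ _. 0)"
  unfolding QB_alt cg_def by simp

lemma subsp_zero: "subsp {0}" by (simp add: subsp_def fun_eq_iff)

lemma quot_trace_zero: "lin g \<Longrightarrow> quot_trace {0} {0} g = 0"
  using quot_trace_eqI[OF subsp_zero _ _ QB_zero] lin_0 by auto


lemma sum_sc_diff: "(\<Sum>b\<in>B. sc (a b - a' b) b) = (\<Sum>b\<in>B. sc (a b) b) - (\<Sum>b\<in>B. sc (a' b) b)"
  by (simp add: fun_eq_iff sum_fun_apply sum_subtractf algebra_simps)

lemma QB_parts:
  assumes "QB K I g B c"
  shows "finite B" "B \<subseteq> K" "\<And>a. (\<Sum>b\<in>B. sc (a b) b) \<in> I \<Longrightarrow> (\<forall>b\<in>B. a b = 0)"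
    "\<forall>k\<in>K. \<exists>a. cg I k (\<Sum>b\<in>B. sc (a b) b)"
    "\<forall>b\<in>B. cg I (g b) (\<Sum>b2\<in>B. sc (c b b2) b2)"
  using assms unfolding QB_alt by blast+

lemma QB_add:
  assumes I: "subsp I" and J: "subsp J" and IJ: "I \<subseteq> J" and JK: "J \<subseteq> K"
    and Q1: "QB J I g B1 c1" and Q2: "QB K J g B2 c2"
  shows "\<exists>c. QB K I g (B1 \<union> B2) c \<and> (\<Sum>b\<in>B1 \<union> B2. c b b) = (\<Sum>b\<in>B1. c1 b b) + (\<Sum>b\<in>B2. c2 b b)"
proof -
  note P1 = QB_parts[OF Q1] and P2 = QB_parts[OF Q2]
  have disj: "B1 \<inter> B2 = {}"
  proof (rule ccontr)
    assume "B1 \<inter> B2 \<noteq> {}"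
    then obtain b where b: "b \<in> B1" "b \<in> B2" by blast
    have "(\<Sum>b2\<in>B2. sc ((\<lambda>b2. if b2 = b then 1 else 0) b2) b2) = b"
      using sum_sc_delta[OF P2(1) b(2)] by simp
    also have "\<dots> \<in> J" using b P1(2) by blast
    finally have "\<forall>b2\<in>B2. (\<lambda>b2. if b2 = b then (1::real) else 0) b2 = 0" by (rule P2(3))
    thus False using b by auto
  qed
  have split: "(\<Sum>b\<in>B1 \<union> B2. sc (a b) b) = (\<Sum>b\<in>B1. sc (a b) b) + (\<Sum>b\<in>B2. sc (a b) b)" for a
    by (rule sum_sc_union[OF P1(1) P2(1) disj])
  have "\<forall>b\<in>B2. \<exists>d. cg I (g b - (\<Sum>b2\<in>B2. sc (c2 b b2) b2)) (\<Sum>b1\<in>B1. sc (d b1) b1)"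
    using P1(4) P2(5) by (auto simp: cg_def)
  from bchoice[OF this] obtain d where d:
    "\<forall>b\<in>B2. cg I (g b - (\<Sum>b2\<in>B2. sc (c2 b b2) b2)) (\<Sum>b1\<in>B1. sc (d b b1) b1)" by blast
  define c where "c = (\<lambda>b b'. if b \<in> B1 then (if b' \<in> B1 then c1 b b' else 0)
      else (if b' \<in> B2 then c2 b b' else d b b'))"
  have indep: "\<forall>b\<in>B1 \<union> B2. a b = 0" if h: "(\<Sum>b\<in>B1 \<union> B2. sc (a b) b) \<in> I" for a
  proof -
    have s1: "(\<Sum>b\<in>B1. sc (a b) b) \<in> J" using J P1(2) by (rule sum_sc_in)
    have "(\<Sum>b\<in>B1. sc (a b) b) + (\<Sum>b\<in>B2. sc (a b) b) \<in> J" using h split IJ by auto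
    hence "((\<Sum>b\<in>B1. sc (a b) b) + (\<Sum>b\<in>B2. sc (a b) b)) - (\<Sum>b\<in>B1. sc (a b) b) \<in> J"
      using s1 J subsp_diff by blast
    hence "(\<Sum>b\<in>B2. sc (a b) b) \<in> J" by simp
    hence a2: "\<forall>b\<in>B2. a b = 0" by (rule P2(3))
    hence "(\<Sum>b\<in>B2. sc (a b) b) = 0" by (simp add: sum_sc_0 cong: sum.cong)
    hence "(\<Sum>b\<in>B1. sc (a b) b) \<in> I" using h split by simp
    hence "\<forall>b\<in>B1. a b = 0" by (rule P1(3))
    with a2 show ?thesis by blast
  qed
  have span: "\<exists>a. cg I k (\<Sum>b\<in>B1 \<union> B2. sc (a b) b)" if k: "k \<in> K" for k
  proof -
    obtain a2 where a2: "k - (\<Sum>b\<in>B2. sc (a2 b) b) \<in> J" using P2(4) k by (auto simp: cg_def)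
    then obtain a1 where a1: "(k - (\<Sum>b\<in>B2. sc (a2 b) b)) - (\<Sum>b\<in>B1. sc (a1 b) b) \<in> I"
      using P1(4) by (auto simp: cg_def)
    define a where "a = (\<lambda>b. if b \<in> B1 then a1 b else a2 b)"
    have "(\<Sum>b\<in>B1 \<union> B2. sc (a b) b) = (\<Sum>b\<in>B1. sc (a1 b) b) + (\<Sum>b\<in>B2. sc (a2 b) b)"
      unfolding split using disj by (auto simp: a_def intro!: sum.cong arg_cong2[where f="(+)"])
    hence "cg I k (\<Sum>b\<in>B1 \<union> B2. sc (a b) b)" using a1
      by (simp add: cg_def diff_diff_eq add.commute)
    thus ?thesis by blast
  qed
  have gc: "cg I (g b) (\<Sum>b2\<in>B1 \<union> B2. sc (c b b2) b2)" if b: "b \<in> B1 \<union> B2" for b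
  proof (cases "b \<in> B1")
    case True
    have e1: "(\<Sum>b2\<in>B1. sc (c b b2) b2) = (\<Sum>b2\<in>B1. sc (c1 b b2) b2)"
      by (rule sum.cong) (use True in \<open>auto simp: c_def\<close>)
    have "(\<Sum>b2\<in>B2. sc (c b b2) b2) = (\<Sum>b2\<in>B2. sc 0 b2)"
      by (rule sum.cong) (use disj True in \<open>auto simp: c_def\<close>)
    hence e2: "(\<Sum>b2\<in>B2. sc (c b b2) b2) = 0" by (simp only: sum_sc_0)
    have "(\<Sum>b2\<in>B1 \<union> B2. sc (c b b2) b2) = (\<Sum>b2\<in>B1. sc (c1 b b2) b2)"
      unfolding split e1 e2 by simp
    thus ?thesis using P1(5) True by simp
  next
    case False
    hence b2: "b \<in> B2" using b by blast
    have "(\<Sum>b2\<in>B1 \<union> B2. sc (c b b2) b2) = (\<Sum>b2\<in>B1. sc (d b b2) b2) + (\<Sum>b2\<in>B2. sc (c2 b b2) b2)"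
      unfolding split using disj False by (auto simp: c_def intro!: sum.cong arg_cong2[where f="(+)"])
    thus ?thesis using d b2 by (simp add: cg_def diff_diff_eq add.commute)
  qed
  have "QB K I g (B1 \<union> B2) c"
    unfolding QB_alt using P1(1,2) P2(1,2) JK indep span gc by blast
  moreover have "(\<Sum>b\<in>B1 \<union> B2. c b b) = (\<Sum>b\<in>B1. c1 b b) + (\<Sum>b\<in>B2. c2 b b)"
    using sum.union_disjoint[OF P1(1) P2(1) disj, of "\<lambda>b. c b b"] disj
    by (auto simp: c_def intro!: sum.cong arg_cong2[where f="(+)"])
  ultimately show ?thesis by blast
qed

lemma sum_sc_img: "lin \<phi> \<Longrightarrow> inj_on \<phi> B \<Longrightarrow>
    (\<Sum>x\<in>\<phi> ` B. sc (a x) x) = \<phi> (\<Sum>b\<in>B. sc (a (\<phi> b)) b)"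
  by (simp add: sum.reindex lin_sum[of \<phi> "\<lambda>b. a (\<phi> b)" id, simplified])

lemma QB_iso:
  assumes I: "subsp I" and K: "subsp K" and IK: "I \<subseteq> K" and phi: "lin \<phi>"
    and Q: "QB K I g B c" and img: "\<phi> ` K = K'"
    and ker: "\<forall>k\<in>K. \<phi> k = 0 \<longleftrightarrow> k \<in> I" and comm: "\<forall>k\<in>K. \<phi> (g k) = g' (\<phi> k)"
  shows "\<exists>c'. QB K' {0} g' (\<phi> ` B) c' \<and> (\<Sum>x\<in>\<phi> ` B. c' x x) = (\<Sum>b\<in>B. c b b)"
proof -
  note P = QB_parts[OF Q]
  have inj: "inj_on \<phi> B"
  proof (rule inj_onI, rule ccontr)
    fix b1 b2 assume b: "b1 \<in> B" "b2 \<in> B" "\<phi> b1 = \<phi> b2" "b1 \<noteq> b2"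
    have "b1 - b2 \<in> K" using b P(2) K subsp_diff by blast
    moreover have "\<phi> (b1 - b2) = 0" using b lin_diff[OF phi] by simp
    ultimately have "b1 - b2 \<in> I" using ker by blast
    moreover have "(\<Sum>b\<in>B. sc ((\<lambda>b. (if b = b1 then 1 else 0) - (if b = b2 then 1 else 0)) b) b) = b1 - b2"
      using sum_sc_diff[of "\<lambda>b. if b = b1 then 1 else 0"] sum_sc_delta[OF P(1) b(1)] sum_sc_delta[OF P(1) b(2)]
      by simp
    ultimately have "(\<Sum>b\<in>B. sc ((\<lambda>b. (if b = b1 then 1 else 0) - (if b = b2 then 1 else (0::real))) b) b) \<in> I"
      by simp
    hence "\<forall>b\<in>B. (\<lambda>b. (if b = b1 then 1 else 0) - (if b = b2 then 1 else (0::real))) b = 0"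
      by (rule P(3))
    thus False using b by auto
  qed
  define \<psi> where "\<psi> = inv_into B \<phi>"
  have psi: "\<psi> (\<phi> b) = b" if "b \<in> B" for b using inj that by (simp add: \<psi>_def)
  define c' where "c' = (\<lambda>x y. c (\<psi> x) (\<psi> y))"
  have re: "(\<Sum>x\<in>\<phi> ` B. sc (a (\<psi> x)) x) = \<phi> (\<Sum>b\<in>B. sc (a b) b)" for a
    using sum_sc_img[OF phi inj, of "\<lambda>x. a (\<psi> x)"] psi by (simp cong: sum.cong)
  have phiI: "\<phi> k = 0" if "k \<in> I" for k using that IK ker by blast
  have indep: "\<forall>x\<in>\<phi> ` B. a' x = 0" if h: "(\<Sum>x\<in>\<phi> ` B. sc (a' x) x) \<in> {0}" for a'
  proof -
    have "\<phi> (\<Sum>b\<in>B. sc (a' (\<phi> b)) b) = 0" using h sum_sc_img[OF phi inj, of a'] by simp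
    moreover have "(\<Sum>b\<in>B. sc (a' (\<phi> b)) b) \<in> K" using K P(2) by (rule sum_sc_in)
    ultimately have "(\<Sum>b\<in>B. sc ((\<lambda>b. a' (\<phi> b)) b) b) \<in> I" using ker by blast
    hence "\<forall>b\<in>B. (\<lambda>b. a' (\<phi> b)) b = 0" by (rule P(3))
    thus ?thesis by auto
  qed
  have span: "\<exists>a. cg {0} k' (\<Sum>x\<in>\<phi> ` B. sc (a x) x)" if k': "k' \<in> K'" for k'
  proof -
    obtain k where k: "k \<in> K" "k' = \<phi> k" using k' img by blast
    obtain a where a: "k - (\<Sum>b\<in>B. sc (a b) b) \<in> I" using P(4) k(1) by (auto simp: cg_def)
    have "\<phi> (k - (\<Sum>b\<in>B. sc (a b) b)) = 0" using phiI[OF a] .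
    hence "k' = \<phi> (\<Sum>b\<in>B. sc (a b) b)" using k lin_diff[OF phi] by simp
    hence "cg {0} k' (\<Sum>x\<in>\<phi> ` B. sc ((\<lambda>x. a (\<psi> x)) x) x)" using re by (simp add: cg_def)
    thus ?thesis by (intro exI[of _ "\<lambda>x. a (\<psi> x)"])
  qed
  have gc: "cg {0} (g' x) (\<Sum>y\<in>\<phi> ` B. sc (c' x y) y)" if x: "x \<in> \<phi> ` B" for x
  proof -
    obtain b where b: "b \<in> B" "x = \<phi> b" using x by blast
    have gb: "g b - (\<Sum>b2\<in>B. sc (c b b2) b2) \<in> I" using P(5) b(1) by (auto simp: cg_def)
    have "g' x = \<phi> (g b)" using comm b P(2) by auto
    also have "\<dots> = \<phi> (\<Sum>b2\<in>B. sc (c b b2) b2)"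
      using phiI[OF gb] lin_diff[OF phi] by simp
    also have "\<dots> = (\<Sum>y\<in>\<phi> ` B. sc (c b (\<psi> y)) y)" using re[of "c b"] by simp
    also have "\<dots> = (\<Sum>y\<in>\<phi> ` B. sc (c' x y) y)" using b psi by (simp add: c'_def)
    finally show ?thesis by (simp add: cg_def)
  qed
  have "QB K' {0} g' (\<phi> ` B) c'"
    unfolding QB_alt using P(1,2) img indep span gc by blast
  moreover have "(\<Sum>x\<in>\<phi> ` B. c' x x) = (\<Sum>b\<in>B. c b b)"
    using psi by (simp add: sum.reindex[OF inj] c'_def)
  ultimately show ?thesis by blast
qed


section \<open>Lists: deletion and adjacent swaps\<close>

definition swp :: "nat \<Rightarrow> 'a list \<Rightarrow> 'a list" where
  "swp i xs = xs[i := xs ! Suc i, Suc i := xs ! i]"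

lemma length_del_nth: "i < length xs \<Longrightarrow> length (del_nth i xs) = length xs - 1"
  by (simp add: del_nth_def)

lemma nth_del_nth: "j < length xs - 1 \<Longrightarrow> del_nth i xs ! j = (if j < i then xs ! j else xs ! Suc j)"
  by (auto simp: del_nth_def nth_append min_def)

lemma length_swp [simp]: "length (swp i xs) = length xs" by (simp add: swp_def)

lemma nth_swp: "Suc i < length xs \<Longrightarrow> j < length xs \<Longrightarrow>
   swp i xs ! j = (if j = i then xs ! Suc i else if j = Suc i then xs ! i else xs ! j)"
  by (auto simp: swp_def nth_list_update)

lemma set_swp: "Suc i < length xs \<Longrightarrow> set (swp i xs) = set xs"
  unfolding swp_def by (rule set_swap) auto

lemma distinct_swp: "Suc i < length xs \<Longrightarrow> distinct (swp i xs) = distinct xs"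
  unfolding swp_def by (rule distinct_swap) auto

lemma map_swp: "Suc i < length xs \<Longrightarrow> map f (swp i xs) = swp i (map f xs)"
  by (auto simp: swp_def map_update)

lemma map_del_nth: "map f (del_nth i xs) = del_nth i (map f xs)"
  by (simp add: del_nth_def take_map drop_map)

lemma del_swp_lt: "i < k \<Longrightarrow> Suc k < length xs \<Longrightarrow> del_nth i (swp k xs) = swp (k - 1) (del_nth i xs)"
  by (rule nth_equalityI) (auto simp: length_del_nth nth_del_nth nth_swp less_Suc_eq)

lemma del_swp_gt: "Suc k < i \<Longrightarrow> i < length xs \<Longrightarrow> del_nth i (swp k xs) = swp k (del_nth i xs)"
  by (rule nth_equalityI) (auto simp: length_del_nth nth_del_nth nth_swp less_Suc_eq)

lemma del_swp_eq1: "Suc k < length xs \<Longrightarrow> del_nth k (swp k xs) = del_nth (Suc k) xs"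
  by (rule nth_equalityI) (auto simp: length_del_nth nth_del_nth nth_swp less_Suc_eq)

lemma del_swp_eq2: "Suc k < length xs \<Longrightarrow> del_nth (Suc k) (swp k xs) = del_nth k xs"
  by (rule nth_equalityI) (auto simp: length_del_nth nth_del_nth nth_swp less_Suc_eq)

lemma del_del: "i \<le> j \<Longrightarrow> Suc j < length xs \<Longrightarrow> del_nth j (del_nth i xs) = del_nth i (del_nth (Suc j) xs)"
  by (rule nth_equalityI) (auto simp: length_del_nth nth_del_nth)


definition alt :: "('a list \<Rightarrow> real) \<Rightarrow> bool" where
  "alt f \<longleftrightarrow> (\<forall>xs i. Suc i < length xs \<longrightarrow> f (swp i xs) = - f xs)"

definition Dop :: "('a list \<Rightarrow> real) \<Rightarrow> 'a list \<Rightarrow> real" where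
  "Dop f xs = (\<Sum>i<length xs. (-1) ^ i * f (del_nth i xs))"

lemma altD: "alt f \<Longrightarrow> Suc i < length xs \<Longrightarrow> f (swp i xs) = - f xs"
  by (simp add: alt_def)

lemma D_alt: assumes "alt f" shows "alt (Dop f)"
  unfolding alt_def
proof (intro allI impI)
  fix xs :: "'a list" and k assume k: "Suc k < length xs"
  define n where "n = length xs"
  define t where "t = (\<lambda>i. (-1) ^ i * f (del_nth i xs))"
  define \<tau> where "\<tau> = Transposition.transpose k (Suc k)"
  have tp: "\<tau> permutes {..<n}" unfolding \<tau>_def using k by (intro permutes_swap_id) (auto simp: n_def)
  have eq: "(-1) ^ i * f (del_nth i (swp k xs)) = - t (\<tau> i)" if i: "i < n" for i
  proof -
    consider "i < k" | "i = k" | "i = Suc k" | "Suc k < i" by linarith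
    thus ?thesis
    proof cases
      case 1
      hence "\<tau> i = i" by (auto simp: \<tau>_def)
      moreover have "f (del_nth i (swp k xs)) = - f (del_nth i xs)"
        using 1 k by (simp add: del_swp_lt altD[OF assms] length_del_nth)
      ultimately show ?thesis by (simp add: t_def)
    next
      case 2
      thus ?thesis using k by (simp add: t_def \<tau>_def del_swp_eq1)
    next
      case 3
      thus ?thesis using k by (simp add: t_def \<tau>_def del_swp_eq2)
    next
      case 4
      hence "\<tau> i = i" by (auto simp: \<tau>_def)
      moreover have "f (del_nth i (swp k xs)) = - f (del_nth i xs)"
        using 4 k i by (simp add: del_swp_gt altD[OF assms] length_del_nth n_def)
      ultimately show ?thesis by (simp add: t_def)
    qed
  qed
  have "Dop f (swp k xs) = (\<Sum>i<n. - t (\<tau> i))"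
    unfolding Dop_def n_def by (intro sum.cong) (auto simp: eq n_def)
  also have "\<dots> = - (\<Sum>i<n. t (\<tau> i))" by (simp add: sum_negf)
  also have "(\<Sum>i<n. t (\<tau> i)) = (\<Sum>i<n. t i)"
    using sum.permute[OF tp, of t] by (simp add: comp_def)
  finally show "Dop f (swp k xs) = - Dop f xs" by (simp add: Dop_def t_def n_def)
qed

lemma alt_zero_aux:
  assumes h: "alt h" shows "j < k \<Longrightarrow> k < length xs \<Longrightarrow> xs ! j = xs ! k \<Longrightarrow> h xs = 0"
proof (induction k arbitrary: xs rule: less_induct)
  case (less k)
  show ?case
  proof (cases "k = Suc j")
    case True
    have "swp j xs = xs" using less True by (simp add: swp_def) (metis list_update_id)
    hence "h xs = - h xs" using altD[OF h, of j xs] less True by simp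
    thus ?thesis by simp
  next
    case False
    hence jk: "j < k - 1" using less by linarith
    define ys where "ys = swp (k - 1) xs"
    have "ys ! j = ys ! (k - 1)" using less jk by (auto simp: ys_def nth_swp)
    hence "h ys = 0" using less jk by (intro less.IH) (auto simp: ys_def)
    moreover have "h ys = - h xs" using altD[OF h, of "k - 1" xs] less jk by (simp add: ys_def)
    ultimately show ?thesis by simp
  qed
qed

lemma alt_nondistinct: "alt h \<Longrightarrow> \<not> distinct xs \<Longrightarrow> h xs = 0"
proof -
  assume h: "alt h" and nd: "\<not> distinct xs"
  then obtain i j where "i < length xs" "j < length xs" "i \<noteq> j" "xs ! i = xs ! j"
    by (auto simp: distinct_conv_nth)
  thus ?thesis using alt_zero_aux[OF h, of i j xs] alt_zero_aux[OF h, of j i xs]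
    by (cases "i < j") auto
qed

lemma DD: "Dop (\<lambda>ys. Dop f ys) xs = 0"
proof -
  define n where "n = length xs"
  define G where "G = (\<lambda>(i, j). (-1) ^ i * ((-1) ^ j * f (del_nth j (del_nth i xs))) :: real)"
  define A where "A = {(i, j). i < n \<and> j < n - 1 \<and> j < i}"
  define Bs where "Bs = {(i, j). i < n \<and> j < n - 1 \<and> i \<le> j}"
  have "Dop (\<lambda>ys. Dop f ys) xs = (\<Sum>i<n. \<Sum>j<n - 1. G (i, j))"
    unfolding Dop_def n_def G_def by (intro sum.cong refl) (simp add: length_del_nth sum_distrib_left)
  also have "\<dots> = (\<Sum>p\<in>{..<n} \<times> {..<n - 1}. G p)"
    by (simp add: sum.cartesian_product)
  also have "{..<n} \<times> {..<n - 1} = A \<union> Bs" by (auto simp: A_def Bs_def)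
  also have "(\<Sum>p\<in>A \<union> Bs. G p) = (\<Sum>p\<in>A. G p) + (\<Sum>p\<in>Bs. G p)"
    by (rule sum.union_disjoint) (auto simp: A_def Bs_def intro: finite_subset[of _ "{..<n} \<times> {..<n}"])
  also have "(\<Sum>p\<in>A. G p) = (\<Sum>p\<in>Bs. G ((\<lambda>(i, j). (Suc j, i)) p))"
  proof (rule sum.reindex_bij_betw[symmetric])
    show "bij_betw (\<lambda>(i, j). (Suc j, i)) Bs A"
    proof (rule bij_betw_imageI)
      show "inj_on (\<lambda>(i, j). (Suc j, i)) Bs" by (auto simp: inj_on_def)
      show "(\<lambda>(i, j). (Suc j, i)) ` Bs = A"
      proof
        show "(\<lambda>(i, j). (Suc j, i)) ` Bs \<subseteq> A" by (auto simp: A_def Bs_def)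
        show "A \<subseteq> (\<lambda>(i, j). (Suc j, i)) ` Bs"
        proof
          fix p assume "p \<in> A"
          then obtain i j where p: "p = (i, j)" "i < n" "j < n - 1" "j < i" by (auto simp: A_def)
          hence "(j, i - 1) \<in> Bs" by (auto simp: Bs_def)
          moreover have "p = (\<lambda>(i, j). (Suc j, i)) (j, i - 1)" using p by auto
          ultimately show "p \<in> (\<lambda>(i, j). (Suc j, i)) ` Bs" by blast
        qed
      qed
    qed
  qed
  also have "(\<Sum>p\<in>Bs. G ((\<lambda>(i, j). (Suc j, i)) p)) = (\<Sum>p\<in>Bs. - G p)"
  proof (rule sum.cong[OF refl])
    fix p assume "p \<in> Bs"
    then obtain i j where p: "p = (i, j)" "i < n" "j < n - 1" "i \<le> j" by (auto simp: Bs_def)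
    have "del_nth j (del_nth i xs) = del_nth i (del_nth (Suc j) xs)"
      using p by (intro del_del) (auto simp: n_def)
    thus "G ((\<lambda>(i, j). (Suc j, i)) p) = - G p" using p by (simp add: G_def)
  qed
  also have "(\<Sum>p\<in>Bs. - G p) + (\<Sum>p\<in>Bs. G p) = 0" by (simp add: sum_negf)
  finally show ?thesis .
qed


section \<open>The cochain complex\<close>

lemma swp_eq: "xs[i := xs ! Suc i, Suc i := xs ! i] = swp i xs" by (simp add: swp_def)

lemma cochains_iff: "f \<in> cochains V E p \<longleftrightarrow> (\<forall>xs. \<not> osimplex V E p xs \<longrightarrow> f xs = 0) \<and> alt f"
  by (simp add: cochains_def alt_def swp_eq)

lemma coboundary_eq: "coboundary V E p f xs = (if osimplex V E (Suc p) xs then Dop f xs else 0)"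
  by (simp add: coboundary_def Dop_def)

lemma os_swp: "Suc i < length xs \<Longrightarrow> osimplex V E p (swp i xs) = osimplex V E p xs"
  by (simp add: osimplex_def set_swp distinct_swp)

lemma set_del_nth: "set (del_nth i xs) \<subseteq> set xs"
  unfolding del_nth_def using set_take_subset set_drop_subset by fastforce

lemma distinct_del_nth: "distinct xs \<Longrightarrow> distinct (del_nth i xs)"
  unfolding del_nth_def using set_take_disj_set_drop_if_distinct[of xs i "Suc i"] by auto

lemma clique_subset: "clique V E s \<Longrightarrow> t \<subseteq> s \<Longrightarrow> t \<noteq> {} \<Longrightarrow> clique V E t"
  unfolding clique_def by blast

lemma os_del: "osimplex V E (Suc p) xs \<Longrightarrow> i < length xs \<Longrightarrow> osimplex V E p (del_nth i xs)"
proof -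
  assume os: "osimplex V E (Suc p) xs" and i: "i < length xs"
  have l: "length (del_nth i xs) = Suc p" using os i by (simp add: length_del_nth osimplex_def)
  hence "set (del_nth i xs) \<noteq> {}" by auto
  thus ?thesis using os l set_del_nth[of i xs] distinct_del_nth[of xs i]
    unfolding osimplex_def by (auto intro: clique_subset)
qed

lemma cob_cochain: assumes f: "f \<in> cochains V E p" shows "coboundary V E p f \<in> cochains V E (Suc p)"
proof -
  have af: "alt f" using f by (simp add: cochains_iff)
  have "alt (coboundary V E p f)" unfolding alt_def
  proof (intro allI impI)
    fix xs :: "'a list" and i assume i: "Suc i < length xs"
    show "coboundary V E p f (swp i xs) = - coboundary V E p f xs"
      using altD[OF D_alt[OF af] i] i by (simp add: coboundary_eq os_swp)
  qed
  thus ?thesis unfolding cochains_iff by (simp add: coboundary_eq)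
qed

lemma cob_cob: "coboundary V E (Suc p) (coboundary V E p f) = (\<lambda>_. 0)"
proof
  fix xs
  show "coboundary V E (Suc p) (coboundary V E p f) xs = 0"
  proof (cases "osimplex V E (Suc (Suc p)) xs")
    case True
    have "Dop (coboundary V E p f) xs = Dop (\<lambda>ys. Dop f ys) xs"
      unfolding Dop_def using os_del[OF True] by (intro sum.cong refl) (simp add: coboundary_eq Dop_def)
    thus ?thesis using True DD[of f xs] by (simp add: coboundary_eq)
  qed (simp add: coboundary_eq)
qed

lemma lin_cob: "lin (coboundary V E p)"
  unfolding lin_def by (auto simp: fun_eq_iff coboundary_eq Dop_def sum.distrib sum_distrib_left algebra_simps)

lemma lin_pb: "lin (pullback V E p T)"
  unfolding lin_def by (auto simp: fun_eq_iff pullback_def)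

lemma subsp_cochains: "subsp (cochains V E p)"
  unfolding subsp_def by (auto simp: cochains_iff alt_def)

lemma zero_fun_lam: "(\<lambda>_. 0 :: real) = 0" by (simp add: fun_eq_iff)

lemma subsp_image: assumes g: "lin g" and K: "subsp K" shows "subsp (g ` K)"
  unfolding subsp_def
proof (intro conjI ballI allI)
  show "0 \<in> g ` K" using lin_0[OF g] subsp_0[OF K] by force
  show "x + y \<in> g ` K" if xy: "x \<in> g ` K" "y \<in> g ` K" for x y
  proof -
    obtain a b where "a \<in> K" "b \<in> K" "x = g a" "y = g b" using xy by blast
    hence "x + y = g (a + b)" "a + b \<in> K" using g K by (auto simp: lin_def subsp_add)
    thus ?thesis by blast
  qed
  show "sc r x \<in> g ` K" if xx: "x \<in> g ` K" for x r
  proof -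
    obtain a where "a \<in> K" "x = g a" using xx by blast
    hence "sc r x = g (sc r a)" "sc r a \<in> K" using g K by (auto simp: lin_def subsp_sc)
    thus ?thesis by blast
  qed
qed

lemma subsp_ker: assumes g: "lin g" and K: "subsp K" shows "subsp {f \<in> K. g f = (\<lambda>_. 0)}"
  using lin_0[OF g] g K unfolding subsp_def lin_def by (auto simp: fun_eq_iff)

lemma subsp_cocycles: "subsp (cocycles V E p)"
  unfolding cocycles_def by (rule subsp_ker[OF lin_cob subsp_cochains])

lemma subsp_coboundaries: "subsp (coboundaries V E p)"
  by (cases p) (simp_all add: coboundaries_def zero_fun_lam subsp_zero subsp_image[OF lin_cob subsp_cochains])

lemma cocycles_sub: "cocycles V E p \<subseteq> cochains V E p" by (auto simp: cocycles_def)

lemma coboundaries_sub: "coboundaries V E p \<subseteq> cocycles V E p"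
proof (cases p)
  case 0
  have "(\<lambda>_. 0) \<in> cocycles V E 0"
    using subsp_0[OF subsp_cocycles] by (simp add: zero_fun_lam)
  thus ?thesis using 0 by (simp add: coboundaries_def)
next
  case (Suc q)
  thus ?thesis by (auto simp: coboundaries_def cocycles_def cob_cochain cob_cob)
qed

lemma finite_os: assumes fin: "finite V" shows "finite {xs. osimplex V E p xs}"
proof -
  have sub: "{xs. osimplex V E p xs} \<subseteq> {xs. set xs \<subseteq> V \<and> length xs = Suc p}"
    unfolding osimplex_def clique_def by blast
  show ?thesis by (rule finite_subset[OF sub finite_lists_length_eq[OF fin]])
qed

lemma cochains_span: assumes "finite V"
  shows "cochains V E p \<subseteq> VS.span ((\<lambda>xs ys. if ys = xs then 1 else 0) ` {xs. osimplex V E p xs})"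
proof
  fix f assume f: "f \<in> cochains V E p"
  define L where "L = {xs. osimplex V E p xs}"
  define \<delta> where "\<delta> = (\<lambda>(xs :: 'a list) ys. if ys = xs then 1 else (0::real))"
  have "f = (\<Sum>xs\<in>L. sc (f xs) (\<delta> xs))"
  proof
    fix ys
    have "(\<Sum>xs\<in>L. sc (f xs) (\<delta> xs)) ys = (\<Sum>xs\<in>L. if xs = ys then f ys else 0)"
      by (simp add: sum_fun_apply \<delta>_def) (intro sum.cong, auto)
    also have "\<dots> = f ys" using f finite_os[OF assms, of E p] by (auto simp: L_def cochains_iff)
    finally show "f ys = (\<Sum>xs\<in>L. sc (f xs) (\<delta> xs)) ys" by simp
  qed
  also have "\<dots> \<in> VS.span (\<delta> ` L)"
    by (intro VS.span_sum VS.span_scale VS.span_base) auto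
  finally show "f \<in> VS.span ((\<lambda>xs ys. if ys = xs then 1 else 0) ` {xs. osimplex V E p xs})"
    by (simp add: L_def \<delta>_def)
qed

lemma os_length: "finite V \<Longrightarrow> osimplex V E p xs \<Longrightarrow> Suc p \<le> card V"
proof -
  assume "finite V" "osimplex V E p xs"
  hence "set xs \<subseteq> V" "distinct xs" "length xs = Suc p" by (auto simp: osimplex_def clique_def)
  thus ?thesis using card_mono[OF \<open>finite V\<close> \<open>set xs \<subseteq> V\<close>] distinct_card[of xs] by simp
qed

lemma cochains_vanish: "finite V \<Longrightarrow> card V \<le> p \<Longrightarrow> cochains V E p = {0}"
proof -
  assume "finite V" "card V \<le> p"
  hence no: "\<not> osimplex V E p xs" for xs using os_length[of V E p xs] by auto
  show ?thesis
  proof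
    show "cochains V E p \<subseteq> {0}"
    proof
      fix f assume "f \<in> cochains V E p"
      hence "\<forall>xs. \<not> osimplex V E p xs \<longrightarrow> f xs = 0" unfolding cochains_iff by blast
      hence "f = 0" using no by (simp add: fun_eq_iff)
      thus "f \<in> {0}" by simp
    qed
    show "{0} \<subseteq> cochains V E p" using subsp_0[OF subsp_cochains] by simp
  qed
qed

section \<open>Graph endomorphisms act on the complex\<close>

lemma clique_image: assumes ge: "graph_endo V E T" and c: "clique V E s" shows "clique V E (T ` s)"
proof -
  have s: "s \<noteq> {}" "s \<subseteq> V" "\<And>x y. x \<in> s \<Longrightarrow> y \<in> s \<Longrightarrow> x \<noteq> y \<Longrightarrow> E x y"
    using c by (auto simp: clique_def)
  have g: "T ` V \<subseteq> V" "\<And>u v. u \<in> V \<Longrightarrow> v \<in> V \<Longrightarrow> E u v \<Longrightarrow> T u = T v \<or> E (T u) (T v)"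
    using ge by (auto simp: graph_endo_def)
  have "E x y" if xy: "x \<in> T ` s" "y \<in> T ` s" "x \<noteq> y" for x y
  proof -
    obtain u v where uv: "u \<in> s" "v \<in> s" "x = T u" "y = T v" using xy by blast
    hence "u \<noteq> v" using xy by blast
    hence "E u v" using s uv by blast
    thus ?thesis using g(2)[of u v] s(2) uv xy by blast
  qed
  moreover have "T ` s \<noteq> {}" using s by auto
  moreover have "T ` s \<subseteq> V" using s(2) g(1) by blast
  ultimately show ?thesis by (auto simp: clique_def)
qed

lemma pb_cochain: assumes f: "f \<in> cochains V E p" shows "pullback V E p T f \<in> cochains V E p"
proof -
  have af: "alt f" using f by (simp add: cochains_iff)
  have "alt (pullback V E p T f)" unfolding alt_def
  proof (intro allI impI)
    fix xs :: "'a list" and i assume i: "Suc i < length xs"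
    have "f (map T (swp i xs)) = - f (map T xs)"
      using altD[OF af, of i "map T xs"] i by (simp add: map_swp)
    thus "pullback V E p T f (swp i xs) = - pullback V E p T f xs"
      using i by (simp add: pullback_def os_swp)
  qed
  thus ?thesis unfolding cochains_iff by (simp add: pullback_def)
qed

lemma pb_comm:
  assumes ge: "graph_endo V E T" and f: "f \<in> cochains V E p"
  shows "coboundary V E p (pullback V E p T f) = pullback V E (Suc p) T (coboundary V E p f)"
proof
  fix xs
  show "coboundary V E p (pullback V E p T f) xs = pullback V E (Suc p) T (coboundary V E p f) xs"
  proof (cases "osimplex V E (Suc p) xs")
    case True
    have "Dop (pullback V E p T f) xs = Dop f (map T xs)"
      unfolding Dop_def using os_del[OF True]
      by (intro sum.cong) (auto simp: pullback_def map_del_nth)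
    moreover have "Dop f (map T xs) = 0" if "\<not> osimplex V E (Suc p) (map T xs)"
    proof -
      have "clique V E (T ` set xs)" using True clique_image[OF ge] by (auto simp: osimplex_def)
      hence "\<not> distinct (map T xs)" using that True by (auto simp: osimplex_def)
      moreover have "alt f" using f by (simp add: cochains_iff)
      ultimately show ?thesis using alt_nondistinct[OF D_alt] by blast
    qed
    ultimately show ?thesis using True by (simp add: coboundary_eq pullback_def)
  next
    case False
    thus ?thesis by (simp add: coboundary_eq pullback_def)
  qed
qed


section \<open>Hopf trace formula\<close>

lemma qt_flag:
  assumes I: "subsp I" and J: "subsp J" and K: "subsp K" and IJ: "I \<subseteq> J" and JK: "J \<subseteq> K"
    and fin: "finite F" and KF: "K \<subseteq> VS.span F" and g: "lin g"
    and gK: "\<forall>x\<in>K. g x \<in> K" and gJ: "\<forall>x\<in>J. g x \<in> J" and gI: "\<forall>x\<in>I. g x \<in> I"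
  shows "quot_trace K I g = quot_trace K J g + quot_trace J I g"
proof -
  obtain B1 c1 where Q1: "QB J I g B1 c1"
    using QB_exists[OF I J IJ fin _ gJ] JK KF by blast
  obtain B2 c2 where Q2: "QB K J g B2 c2"
    using QB_exists[OF J K JK fin KF gK] by blast
  obtain c where Q: "QB K I g (B1 \<union> B2) c"
    and tr: "(\<Sum>b\<in>B1 \<union> B2. c b b) = (\<Sum>b\<in>B1. c1 b b) + (\<Sum>b\<in>B2. c2 b b)"
    using QB_add[OF I J IJ JK Q1 Q2] by blast
  show ?thesis
    using quot_trace_eqI[OF I g gI Q] quot_trace_eqI[OF J g gJ Q2] quot_trace_eqI[OF I g gI Q1] tr
    by simp
qed

lemma qt_iso:
  assumes I: "subsp I" and K: "subsp K" and IK: "I \<subseteq> K"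
    and fin: "finite F" and KF: "K \<subseteq> VS.span F" and g: "lin g"
    and gK: "\<forall>x\<in>K. g x \<in> K" and gI: "\<forall>x\<in>I. g x \<in> I"
    and phi: "lin \<phi>" and img: "\<phi> ` K = K'"
    and ker: "\<forall>k\<in>K. \<phi> k = 0 \<longleftrightarrow> k \<in> I" and comm: "\<forall>k\<in>K. \<phi> (g k) = g' (\<phi> k)"
    and g': "lin g'"
  shows "quot_trace K I g = quot_trace K' {0} g'"
proof -
  obtain B c where Q: "QB K I g B c"
    using QB_exists[OF I K IK fin KF gK] by blast
  obtain c' where Q': "QB K' {0} g' (\<phi> ` B) c'" and tr: "(\<Sum>x\<in>\<phi> ` B. c' x x) = (\<Sum>b\<in>B. c b b)"
    using QB_iso[OF I K IK phi Q img ker comm] by blast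
  have g'0: "\<forall>x\<in>{0}. g' x \<in> {0}" using lin_0[OF g'] by simp
  show ?thesis using quot_trace_eqI[OF I g gI Q] quot_trace_eqI[OF subsp_zero g' g'0 Q'] tr by simp
qed

context
  fixes V :: "'a set" and E :: "'a \<Rightarrow> 'a \<Rightarrow> bool" and T :: "'a \<Rightarrow> 'a"
  assumes sg: "finite V" and ge: "graph_endo V E T"
begin

lemma finV: "finite V" using sg .

definition "FF p = ((\<lambda>xs ys. if ys = xs then 1 else 0) ` {xs. osimplex V E p xs} :: ('a list \<Rightarrow> real) set)"

lemma FF: "finite (FF p)" "cochains V E p \<subseteq> VS.span (FF p)"
  using finite_os[OF finV] cochains_span[OF finV] by (auto simp: FF_def)

lemma pb_zero: "pullback V E p T (\<lambda>_. 0) = (\<lambda>_. 0)"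
  by (simp add: pullback_def fun_eq_iff)

lemma gC: "\<forall>x\<in>cochains V E p. pullback V E p T x \<in> cochains V E p"
  using pb_cochain by blast

lemma gZ: "\<forall>x\<in>cocycles V E p. pullback V E p T x \<in> cocycles V E p"
  using pb_cochain pb_comm[OF ge] pb_zero by (auto simp: cocycles_def)

lemma gB: "\<forall>x\<in>coboundaries V E p. pullback V E p T x \<in> coboundaries V E p"
proof (cases p)
  case 0 thus ?thesis by (simp add: coboundaries_def pb_zero)
next
  case (Suc q)
  have "pullback V E (Suc q) T (coboundary V E q f) \<in> coboundary V E q ` cochains V E q"
    if "f \<in> cochains V E q" for f
    using pb_comm[OF ge that, symmetric] pb_cochain[OF that] by blast
  thus ?thesis using Suc by (auto simp: coboundaries_def)
qed

lemma g0: "\<forall>x\<in>{0}. pullback V E p T x \<in> {0}"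
  using lin_0[OF lin_pb] by simp

lemma hopf_step:
  "quot_trace (cochains V E p) {0} (pullback V E p T) =
     quot_trace (coboundaries V E (Suc p)) {0} (pullback V E (Suc p) T)
     + cohom_trace V E T p + quot_trace (coboundaries V E p) {0} (pullback V E p T)"
proof -
  have ZC: "cocycles V E p \<subseteq> cochains V E p" by (rule cocycles_sub)
  have BZ: "coboundaries V E p \<subseteq> cocycles V E p" by (rule coboundaries_sub)
  have 0: "{0} \<subseteq> coboundaries V E p" using subsp_0[OF subsp_coboundaries] by simp
  have 1: "quot_trace (cochains V E p) {0} (pullback V E p T) =
     quot_trace (cochains V E p) (cocycles V E p) (pullback V E p T) + quot_trace (cocycles V E p) {0} (pullback V E p T)"
    by (rule qt_flag[OF subsp_zero subsp_cocycles subsp_cochains _ ZC FF lin_pb gC gZ g0])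
       (use 0 BZ in auto)
  have 2: "quot_trace (cocycles V E p) {0} (pullback V E p T) =
     quot_trace (cocycles V E p) (coboundaries V E p) (pullback V E p T) + quot_trace (coboundaries V E p) {0} (pullback V E p T)"
    by (rule qt_flag[OF subsp_zero subsp_coboundaries subsp_cocycles 0 BZ FF(1)])
       (use ZC FF(2) lin_pb gZ gB g0 in auto)
  have 3: "quot_trace (cochains V E p) (cocycles V E p) (pullback V E p T) =
      quot_trace (coboundaries V E (Suc p)) {0} (pullback V E (Suc p) T)"
  proof (rule qt_iso[OF subsp_cocycles subsp_cochains ZC FF lin_pb gC gZ lin_cob])
    show "coboundary V E p ` cochains V E p = coboundaries V E (Suc p)" by (simp add: coboundaries_def)
    show "\<forall>k\<in>cochains V E p. (coboundary V E p k = 0) = (k \<in> cocycles V E p)"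
      by (simp add: cocycles_def zero_fun_lam)
    show "\<forall>k\<in>cochains V E p. coboundary V E p (pullback V E p T k) = pullback V E (Suc p) T (coboundary V E p k)"
      using pb_comm[OF ge] by blast
  qed (rule lin_pb)
  show ?thesis using 1 2 3 by (simp add: cohom_trace_def)
qed

lemma hopf_sum:
  "(\<Sum>p\<le>N. (-1) ^ p * quot_trace (cochains V E p) {0} (pullback V E p T)) =
   (\<Sum>p\<le>N. (-1) ^ p * cohom_trace V E T p) + (-1) ^ N * quot_trace (coboundaries V E (Suc N)) {0} (pullback V E (Suc N) T)"
proof -
  define c where "c = (\<lambda>p. quot_trace (cochains V E p) {0} (pullback V E p T))"
  define b where "b = (\<lambda>p. quot_trace (coboundaries V E p) {0} (pullback V E p T))"
  define h where "h = (\<lambda>p. cohom_trace V E T p)"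
  have step: "c p = b (Suc p) + h p + b p" for p unfolding b_def c_def h_def by (rule hopf_step)
  have b0: "b 0 = 0" unfolding b_def
    using quot_trace_zero[OF lin_pb] by (simp add: coboundaries_def zero_fun_lam)
  have "(\<Sum>p\<le>N. (-1) ^ p * c p) = (\<Sum>p\<le>N. (-1) ^ p * h p) + (-1) ^ N * b (Suc N)"
  proof (induction N)
    case 0 thus ?case using step[of 0] b0 by simp
  next
    case (Suc N) thus ?case using step[of "Suc N"] by (simp add: algebra_simps)
  qed
  thus ?thesis unfolding c_def b_def h_def .
qed

lemma lefschetz_chain:
  "lefschetz V E T = (\<Sum>p\<le>N. (-1) ^ p * quot_trace (cochains V E p) {0} (pullback V E p T))"
  if "card V \<le> N" for N
proof -
  have "(\<Sum>p\<le>N. (-1) ^ p * cohom_trace V E T p) = (\<Sum>p\<le>card V. (-1) ^ p * cohom_trace V E T p)"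
  proof -
    have "cohom_trace V E T p = 0" if "card V < p" for p
    proof -
      have "cochains V E p = {0}" using cochains_vanish[OF finV] that by simp
      hence "cocycles V E p = {0}" using cocycles_sub[of V E p] subsp_0[OF subsp_cocycles[of V E p]] by auto
      moreover have "coboundaries V E p = {0}"
        using coboundaries_sub[of V E p] subsp_0[OF subsp_coboundaries[of V E p]] \<open>cocycles V E p = {0}\<close> by auto
      ultimately show ?thesis using quot_trace_zero[OF lin_pb] by (simp add: cohom_trace_def)
    qed
    hence z: "(\<Sum>p\<in>{card V<..N}. (-1) ^ p * cohom_trace V E T p) = 0" by (intro sum.neutral) auto
    have "{..N} = {..card V} \<union> {card V<..N}" using \<open>card V \<le> N\<close> by auto
    hence "(\<Sum>p\<le>N. (-1) ^ p * cohom_trace V E T p) = (\<Sum>p\<le>card V. (-1) ^ p * cohom_trace V E T p)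
        + (\<Sum>p\<in>{card V<..N}. (-1) ^ p * cohom_trace V E T p)"
      by (subst sum.union_disjoint[symmetric]) auto
    thus ?thesis using z by simp
  qed
  moreover have "quot_trace (coboundaries V E (Suc N)) {0} (pullback V E (Suc N) T) = 0"
  proof -
    have "cochains V E N = {0}" using cochains_vanish[OF finV] that by simp
    hence "coboundaries V E (Suc N) = {coboundary V E N 0}" by (simp add: coboundaries_def)
    also have "coboundary V E N 0 = 0" using lin_0[OF lin_cob] .
    finally show ?thesis using quot_trace_zero[OF lin_pb] by (simp add: zero_fun_lam)
  qed
  ultimately show ?thesis using hopf_sum[of N] by (simp add: lefschetz_def)
qed

end


section \<open>Alternating functions and permutations\<close>

lemma alt_swap_gen:
  assumes f: "alt f"
  shows "i < j \<Longrightarrow> j < length ys \<Longrightarrow> f (ys[i := ys ! j, j := ys ! i]) = - f ys"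
proof (induction "j - i" arbitrary: i ys rule: less_induct)
  case less
  show ?case
  proof (cases "j = Suc i")
    case True
    thus ?thesis using altD[OF f, of i ys] less by (simp add: swp_def)
  next
    case False
    hence ij: "Suc i < j" using less by simp
    define zs where "zs = swp i ys"
    define ws where "ws = zs[Suc i := zs ! j, j := zs ! Suc i]"
    have lz: "length zs = length ys" by (simp add: zs_def)
    have fw: "f ws = - f zs"
      unfolding ws_def using ij less lz by (intro less.hyps) auto
    have "swp i ws = ys[i := ys ! j, j := ys ! i]"
      using ij less by (intro nth_equalityI) (auto simp: ws_def zs_def swp_def nth_list_update)
    moreover have "f (swp i ws) = - f ws" using altD[OF f, of i ws] ij less by (simp add: ws_def zs_def)
    moreover have "f zs = - f ys" using altD[OF f, of i ys] ij less by (simp add: zs_def)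
    ultimately show ?thesis using fw by simp
  qed
qed

lemma map_transpose_list:
  assumes d: "distinct ys" and i: "i < length ys" and j: "j < length ys"
  shows "map (Transposition.transpose (ys ! i) (ys ! j)) ys = ys[i := ys ! j, j := ys ! i]"
proof (rule nth_equalityI)
  show "length (map (Transposition.transpose (ys ! i) (ys ! j)) ys) = length (ys[i := ys ! j, j := ys ! i])" by simp
  fix k assume k: "k < length (map (Transposition.transpose (ys ! i) (ys ! j)) ys)"
  hence k': "k < length ys" by simp
  have "ys ! k = ys ! i \<longleftrightarrow> k = i" "ys ! k = ys ! j \<longleftrightarrow> k = j"
    using d k' i j by (auto simp: nth_eq_iff_index_eq)
  thus "map (Transposition.transpose (ys ! i) (ys ! j)) ys ! k = ys[i := ys ! j, j := ys ! i] ! k"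
    using k' i j by (auto simp: nth_list_update transpose_def)
qed

lemma perm_alt:
  assumes f: "alt f" and d: "distinct l" and p: "\<pi> permutes set l"
  shows "f (map \<pi> l) = real_of_int (sign \<pi>) * f l"
  using p finite_set[of l]
proof (induction rule: permutes_induct)
  case id
  thus ?case by simp
next
  case (swap a b p)
  define ys where "ys = map p l"
  have dys: "distinct ys" using d swap.hyps(4) by (simp add: ys_def distinct_map permutes_inj_on)
  have sys: "set ys = set l" using permutes_image[OF swap.hyps(4)] by (simp add: ys_def)
  obtain i where i: "i < length ys" "ys ! i = a" using swap.hyps(1) sys by (metis in_set_conv_nth)
  obtain j where j: "j < length ys" "ys ! j = b" using swap.hyps(2) sys by (metis in_set_conv_nth)
  have ij: "i \<noteq> j" using i j swap.hyps(3) by auto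
  have "map (Transposition.transpose a b \<circ> p) l = ys[i := ys ! j, j := ys ! i]"
    using map_transpose_list[OF dys i(1) j(1)] i j by (simp add: ys_def)
  moreover have "f (ys[i := ys ! j, j := ys ! i]) = - f ys"
  proof (cases "i < j")
    case True thus ?thesis using alt_swap_gen[OF f True j(1)] by simp
  next
    case False
    hence "j < i" using ij by simp
    moreover have "ys[i := ys ! j, j := ys ! i] = ys[j := ys ! i, i := ys ! j]" using ij by (rule list_update_swap)
    ultimately show ?thesis using alt_swap_gen[OF f _ i(1)] by simp
  qed
  moreover have "sign (Transposition.transpose a b \<circ> p) = - sign p"
    using swap.hyps(3) sign_compose[OF permutation_swap_id permutes_imp_permutation[OF finite_set swap.hyps(4)]]
    by (simp add: sign_swap_id)
  ultimately have "f (map (Transposition.transpose a b \<circ> p) l) = - (real_of_int (sign p) * f l)"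
    and sg: "real_of_int (sign (Transposition.transpose a b \<circ> p)) = - real_of_int (sign p)"
    using swap.IH by (simp_all add: ys_def)
  thus ?case by (simp only: sg)
qed

section \<open>The standard basis of cochains\<close>

definition lst :: "'a set \<Rightarrow> 'a list" where "lst \<sigma> = (SOME l. distinct l \<and> set l = \<sigma>)"

lemma lst: assumes "finite \<sigma>" shows "distinct (lst \<sigma>) \<and> set (lst \<sigma>) = \<sigma>"
  unfolding lst_def by (rule someI_ex[of "\<lambda>l. distinct l \<and> set l = \<sigma>"]) (use finite_distinct_list[OF assms] in blast)

lemma length_lst: "finite \<sigma> \<Longrightarrow> length (lst \<sigma>) = card \<sigma>"
  using lst distinct_card by metis

definition pmo :: "'a list \<Rightarrow> 'a list \<Rightarrow> 'a \<Rightarrow> 'a" where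
  "pmo l xs = restrict_id (\<lambda>y. the (map_of (zip l xs) y)) (set l)"

lemma pmo_nth: "distinct l \<Longrightarrow> length xs = length l \<Longrightarrow> j < length l \<Longrightarrow> pmo l xs (l ! j) = xs ! j"
  by (simp add: pmo_def map_of_zip_nth)

lemma map_pmo: "distinct l \<Longrightarrow> length xs = length l \<Longrightarrow> map (pmo l xs) l = xs"
  by (rule nth_equalityI) (auto simp: pmo_nth)

lemma pmo_out: "y \<notin> set l \<Longrightarrow> pmo l xs y = y" by (simp add: pmo_def)

lemma pmo_permutes:
  assumes d: "distinct l" and dx: "distinct xs" and s: "set xs = set l"
  shows "pmo l xs permutes set l"
proof (rule bij_imp_permutes)
  have len: "length xs = length l" using d dx s by (metis distinct_card)
  have img: "pmo l xs ` set l = set l"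
  proof
    show "pmo l xs ` set l \<subseteq> set l"
    proof
      fix z assume "z \<in> pmo l xs ` set l"
      then obtain y where y: "y \<in> set l" "z = pmo l xs y" by blast
      then obtain j where j: "j < length l" "y = l ! j" by (metis in_set_conv_nth)
      hence "z = xs ! j" using y pmo_nth[OF d len] by simp
      thus "z \<in> set l" using j len s nth_mem[of j xs] by simp
    qed
    show "set l \<subseteq> pmo l xs ` set l"
    proof
      fix z assume "z \<in> set l"
      hence "z \<in> set xs" using s by simp
      then obtain j where j: "j < length xs" "z = xs ! j" by (metis in_set_conv_nth)
      hence "z = pmo l xs (l ! j)" using pmo_nth[OF d len] len by simp
      moreover have "l ! j \<in> set l" using j len by simp
      ultimately show "z \<in> pmo l xs ` set l" by blast
    qed
  qed
  moreover have "inj_on (pmo l xs) (set l)" using img by (intro eq_card_imp_inj_on) auto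
  ultimately show "bij_betw (pmo l xs) (set l) (set l)" by (simp add: bij_betw_def)
  show "pmo l xs x = x" if "x \<notin> set l" for x using that by (rule pmo_out)
qed

definition esig :: "'a set \<Rightarrow> 'a list \<Rightarrow> real" where
  "esig \<sigma> xs = (if distinct xs \<and> set xs = \<sigma> then real_of_int (sign (pmo (lst \<sigma>) xs)) else 0)"

lemma alt_expand:
  assumes f: "alt f" and dx: "distinct xs"
  shows "f xs = esig (set xs) xs * f (lst (set xs))"
proof -
  define l where "l = lst (set xs)"
  have l: "distinct l" "set l = set xs" using lst[of "set xs"] by (auto simp: l_def)
  have len: "length xs = length l" using l dx by (metis distinct_card)
  have "f xs = f (map (pmo l xs) l)" using map_pmo[OF l(1) len] by simp
  also have "\<dots> = real_of_int (sign (pmo l xs)) * f l"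
    by (rule perm_alt[OF f l(1) pmo_permutes[OF l(1) dx l(2)[symmetric]]])
  finally show ?thesis using dx by (simp add: esig_def l_def)
qed

lemma pmo_self: "distinct l \<Longrightarrow> pmo l l = id"
proof
  fix y assume d: "distinct l"
  show "pmo l l y = id y"
  proof (cases "y \<in> set l")
    case True
    then obtain j where "j < length l" "y = l ! j" by (metis in_set_conv_nth)
    thus ?thesis using pmo_nth[OF d refl] by simp
  qed (simp add: pmo_out)
qed

lemma esig_self: "finite \<sigma> \<Longrightarrow> esig \<sigma> (lst \<sigma>) = 1"
  using lst[of \<sigma>] pmo_self[of "lst \<sigma>"] by (simp add: esig_def)

lemma esig_nz: "esig \<sigma> xs \<noteq> 0 \<Longrightarrow> distinct xs \<and> set xs = \<sigma>"
  by (auto simp: esig_def split: if_splits)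

lemma pmo_swp:
  assumes d: "distinct l" and dx: "distinct xs" and s: "set xs = set l" and i: "Suc i < length xs"
  shows "pmo l (swp i xs) = Transposition.transpose (xs ! i) (xs ! Suc i) \<circ> pmo l xs"
proof
  fix y
  have len: "length xs = length l" using d dx s by (metis distinct_card)
  show "pmo l (swp i xs) y = (Transposition.transpose (xs ! i) (xs ! Suc i) \<circ> pmo l xs) y"
  proof (cases "y \<in> set l")
    case True
    then obtain j where j: "j < length l" "y = l ! j" by (metis in_set_conv_nth)
    have "xs ! j = xs ! i \<longleftrightarrow> j = i" "xs ! j = xs ! Suc i \<longleftrightarrow> j = Suc i"
      using dx j i len by (auto simp: nth_eq_iff_index_eq)
    thus ?thesis using j i len pmo_nth[OF d len] pmo_nth[OF d, of "swp i xs"]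
      by (auto simp: nth_swp transpose_def)
  next
    case False
    moreover have "xs ! i \<in> set l" "xs ! Suc i \<in> set l" using i s nth_mem[of i xs] nth_mem[of "Suc i" xs] by auto
    ultimately show ?thesis using pmo_out[OF False] by (auto simp: transpose_def)
  qed
qed

lemma esig_alt: assumes fin: "finite \<sigma>" shows "alt (esig \<sigma>)"
  unfolding alt_def
proof (intro allI impI)
  fix xs :: "'a list" and i assume i: "Suc i < length xs"
  show "esig \<sigma> (swp i xs) = - esig \<sigma> xs"
  proof (cases "distinct xs \<and> set xs = \<sigma>")
    case True
    define l where "l = lst \<sigma>"
    have l: "distinct l" "set l = \<sigma>" using lst[OF fin] by (auto simp: l_def)
    have ne: "xs ! i \<noteq> xs ! Suc i" using True i by (auto simp: nth_eq_iff_index_eq)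
    have pp: "pmo l xs permutes set l" using pmo_permutes[OF l(1)] True l by simp
    have "pmo l (swp i xs) = Transposition.transpose (xs ! i) (xs ! Suc i) \<circ> pmo l xs"
      using pmo_swp[OF l(1) _ _ i] True l by simp
    moreover have "sign (Transposition.transpose (xs ! i) (xs ! Suc i) \<circ> pmo l xs) = - sign (pmo l xs)"
      using sign_compose[OF permutation_swap_id permutes_imp_permutation[OF finite_set pp]] ne
      by (simp add: sign_swap_id)
    ultimately have "sign (pmo l (swp i xs)) = - sign (pmo l xs)" by simp
    thus ?thesis using True i by (simp add: esig_def set_swp distinct_swp l_def)
  next
    case False
    thus ?thesis using i by (auto simp: esig_def set_swp distinct_swp)
  qed
qed


context
  fixes V :: "'a set" and E :: "'a \<Rightarrow> 'a \<Rightarrow> bool" and T :: "'a \<Rightarrow> 'a"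
  assumes sg: "finite V" and ge: "graph_endo V E T"
begin

definition "Sig p = {\<sigma>. clique V E \<sigma> \<and> card \<sigma> = Suc p}"

lemma clique_fin: "clique V E \<sigma> \<Longrightarrow> finite \<sigma>"
  using finV[OF sg ge] by (auto simp: clique_def intro: finite_subset)

lemma finite_Sig: "finite (Sig p)"
proof -
  have "Sig p \<subseteq> Pow V" by (auto simp: Sig_def clique_def)
  thus ?thesis using finV[OF sg ge] by (auto intro: finite_subset)
qed

lemma os_iff: "osimplex V E p xs \<longleftrightarrow> distinct xs \<and> set xs \<in> Sig p"
  by (auto simp: osimplex_def Sig_def distinct_card)

lemma esig_in: "\<sigma> \<in> Sig p \<Longrightarrow> esig \<sigma> \<in> cochains V E p"
  unfolding cochains_iff
proof (intro conjI allI impI)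
  assume s: "\<sigma> \<in> Sig p"
  show "alt (esig \<sigma>)" using s clique_fin by (intro esig_alt) (auto simp: Sig_def)
  fix xs assume "\<not> osimplex V E p xs"
  thus "esig \<sigma> xs = 0" using esig_nz[of \<sigma> xs] s os_iff by blast
qed

lemma lst_Sig: "\<sigma> \<in> Sig p \<Longrightarrow> distinct (lst \<sigma>) \<and> set (lst \<sigma>) = \<sigma>"
  using lst clique_fin by (auto simp: Sig_def)

lemma lst_os: "\<sigma> \<in> Sig p \<Longrightarrow> osimplex V E p (lst \<sigma>)"
  using lst_Sig os_iff by auto

lemma esig_lst: "\<sigma> \<in> Sig p \<Longrightarrow> \<tau> \<in> Sig p \<Longrightarrow> esig \<sigma> (lst \<tau>) = (if \<sigma> = \<tau> then 1 else 0)"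
  using esig_self[of \<tau>] esig_nz[of \<sigma> "lst \<tau>"] lst_Sig[of \<tau> p] clique_fin by (auto simp: Sig_def)

lemma expansion:
  assumes f: "f \<in> cochains V E p"
  shows "f = (\<Sum>\<sigma>\<in>Sig p. sc (f (lst \<sigma>)) (esig \<sigma>))"
proof
  fix xs
  have af: "alt f" using f by (simp add: cochains_iff)
  have "(\<Sum>\<sigma>\<in>Sig p. sc (f (lst \<sigma>)) (esig \<sigma>)) xs = (\<Sum>\<sigma>\<in>Sig p. f (lst \<sigma>) * esig \<sigma> xs)"
    by (simp add: sum_fun_apply)
  also have "\<dots> = f xs"
  proof (cases "distinct xs \<and> set xs \<in> Sig p")
    case True
    have "(\<Sum>\<sigma>\<in>Sig p. f (lst \<sigma>) * esig \<sigma> xs) = (\<Sum>\<sigma>\<in>Sig p. if \<sigma> = set xs then f (lst \<sigma>) * esig \<sigma> xs else 0)"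
      by (rule sum.cong) (auto dest: esig_nz)
    also have "\<dots> = f (lst (set xs)) * esig (set xs) xs" using True finite_Sig by simp
    also have "\<dots> = f xs" using alt_expand[OF af, of xs] True by simp
    finally show ?thesis .
  next
    case False
    hence "f xs = 0" using f os_iff by (auto simp: cochains_iff)
    moreover have "(\<Sum>\<sigma>\<in>Sig p. f (lst \<sigma>) * esig \<sigma> xs) = 0"
      using False by (intro sum.neutral) (auto dest: esig_nz)
    ultimately show ?thesis by simp
  qed
  finally show "f xs = (\<Sum>\<sigma>\<in>Sig p. sc (f (lst \<sigma>)) (esig \<sigma>)) xs" by simp
qed

lemma inj_esig: "inj_on esig (Sig p)"
proof (rule inj_onI)
  fix \<sigma> \<tau> assume st: "\<sigma> \<in> Sig p" "\<tau> \<in> Sig p" "esig \<sigma> = esig \<tau>"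
  hence "esig \<sigma> (lst \<tau>) = esig \<tau> (lst \<tau>)" by simp
  thus "\<sigma> = \<tau>" using esig_lst[OF st(1,2)] esig_lst[OF st(2,2)] by (auto split: if_splits)
qed

lemma chain_trace:
  "quot_trace (cochains V E p) {0} (pullback V E p T) = (\<Sum>\<sigma>\<in>Sig p. esig \<sigma> (map T (lst \<sigma>)))"
proof -
  define B where "B = esig ` Sig p"
  define \<psi> where "\<psi> = inv_into (Sig p) esig"
  have psi: "\<psi> (esig \<sigma>) = \<sigma>" if "\<sigma> \<in> Sig p" for \<sigma> using inj_esig that by (simp add: \<psi>_def)
  define g where "g = pullback V E p T"
  define c where "c = (\<lambda>x y. g x (lst (\<psi> y)))"
  have re: "(\<Sum>x\<in>B. sc (a x) x) = (\<Sum>\<sigma>\<in>Sig p. sc (a (esig \<sigma>)) (esig \<sigma>))" for a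
    unfolding B_def by (simp add: sum.reindex[OF inj_esig])
  have exp: "k = (\<Sum>x\<in>B. sc (k (lst (\<psi> x))) x)" if "k \<in> cochains V E p" for k
    using expansion[OF that] re[of "\<lambda>x. k (lst (\<psi> x))"] psi by (simp cong: sum.cong)
  have Q: "QB (cochains V E p) {0} g B c"
    unfolding QB_alt
  proof (intro conjI allI impI ballI)
    show "finite B" using finite_Sig by (simp add: B_def)
    show "B \<subseteq> cochains V E p" using esig_in by (auto simp: B_def)
    fix a assume h: "(\<Sum>b\<in>B. sc (a b) b) \<in> {0}"
    fix b assume b: "b \<in> B"
    then obtain \<tau> where \<tau>: "\<tau> \<in> Sig p" "b = esig \<tau>" by (auto simp: B_def)
    have "0 = (\<Sum>\<sigma>\<in>Sig p. sc (a (esig \<sigma>)) (esig \<sigma>)) (lst \<tau>)" using h re[of a] by simp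
    also have "\<dots> = (\<Sum>\<sigma>\<in>Sig p. if \<sigma> = \<tau> then a (esig \<sigma>) else 0)"
      by (simp add: sum_fun_apply esig_lst[OF _ \<tau>(1)] if_distrib cong: sum.cong) (intro sum.cong, auto)
    also have "\<dots> = a (esig \<tau>)" using \<tau>(1) finite_Sig by simp
    finally show "a b = 0" using \<tau> by simp
  next
    fix k assume "k \<in> cochains V E p"
    hence "cg {0} k (\<Sum>x\<in>B. sc (k (lst (\<psi> x))) x)" using exp by (simp add: cg_def)
    thus "\<exists>a. cg {0} k (\<Sum>x\<in>B. sc (a x) x)" by (intro exI[of _ "\<lambda>x. k (lst (\<psi> x))"])
  next
    fix b assume "b \<in> B"
    then obtain \<sigma> where "\<sigma> \<in> Sig p" "b = esig \<sigma>" by (auto simp: B_def)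
    hence "g b \<in> cochains V E p" using esig_in pb_cochain unfolding g_def by blast
    thus "cg {0} (g b) (\<Sum>b2\<in>B. sc (c b b2) b2)" using exp by (simp add: cg_def c_def)
  qed
  have "quot_trace (cochains V E p) {0} g = (\<Sum>b\<in>B. c b b)"
    by (rule quot_trace_eqI[OF subsp_zero _ _ Q]) (use lin_pb lin_0[OF lin_pb] in \<open>auto simp: g_def\<close>)
  also have "\<dots> = (\<Sum>\<sigma>\<in>Sig p. g (esig \<sigma>) (lst \<sigma>))"
    unfolding B_def by (simp add: sum.reindex[OF inj_esig] c_def psi)
  also have "\<dots> = (\<Sum>\<sigma>\<in>Sig p. esig \<sigma> (map T (lst \<sigma>)))"
    by (rule sum.cong) (auto simp: g_def pullback_def lst_os)
  finally show ?thesis by (simp add: g_def)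
qed

lemma esig_map: assumes s: "\<sigma> \<in> Sig p"
  shows "esig \<sigma> (map T (lst \<sigma>)) = (if T ` \<sigma> = \<sigma> then real_of_int (sign_on \<sigma> T) else 0)"
proof -
  define l where "l = lst \<sigma>"
  have l: "distinct l" "set l = \<sigma>" using lst_Sig[OF s] by (auto simp: l_def)
  have fs: "finite \<sigma>" using s clique_fin by (auto simp: Sig_def)
  show ?thesis
  proof (cases "T ` \<sigma> = \<sigma>")
    case True
    have "card (set (map T l)) = length (map T l)"
      using True l distinct_card[OF l(1)] by simp
    hence d: "distinct (map T l)" by (rule card_distinct)
    have "pmo l (map T l) = restrict_id T \<sigma>"
    proof
      fix y show "pmo l (map T l) y = restrict_id T \<sigma> y"
      proof (cases "y \<in> \<sigma>")
        case True
        then obtain j where "j < length l" "y = l ! j" using l by (metis in_set_conv_nth)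
        thus ?thesis using pmo_nth[OF l(1), of "map T l" j] True by simp
      next
        case False thus ?thesis using l by (simp add: pmo_out)
      qed
    qed
    thus ?thesis using True d l by (simp add: esig_def sign_on_def l_def)
  next
    case False thus ?thesis using l by (auto simp: esig_def l_def)
  qed
qed

definition "chi = (\<Sum>\<sigma>\<in>{\<sigma>. clique V E \<sigma> \<and> T ` \<sigma> = \<sigma>}. (-1) ^ (card \<sigma> - 1) * real_of_int (sign_on \<sigma> T))"

lemma lefschetz_chi: "lefschetz V E T = chi"
proof -
  define N where "N = card V"
  define Cl where "Cl = {\<sigma>. clique V E \<sigma>}"
  define w where "w = (\<lambda>\<sigma>. if T ` \<sigma> = \<sigma> then real_of_int (sign_on \<sigma> T) else 0)"
  have finCl: "finite Cl"
  proof -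
    have "Cl \<subseteq> Pow V" by (auto simp: Cl_def clique_def)
    thus ?thesis using finV[OF sg ge] by (auto intro: finite_subset)
  qed
  have "lefschetz V E T = (\<Sum>p\<le>N. (-1) ^ p * quot_trace (cochains V E p) {0} (pullback V E p T))"
    using lefschetz_chain[OF sg ge] by (simp add: N_def)
  also have "\<dots> = (\<Sum>p\<le>N. \<Sum>\<sigma>\<in>{\<sigma> \<in> Cl. card \<sigma> - 1 = p}. (-1) ^ (card \<sigma> - 1) * w \<sigma>)"
  proof (rule sum.cong[OF refl])
    fix p
    have eq: "{\<sigma> \<in> Cl. card \<sigma> - 1 = p} = Sig p"
    proof -
      have "card \<sigma> \<noteq> 0" if "clique V E \<sigma>" for \<sigma>
        using that clique_fin[OF that] by (auto simp: clique_def)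
      thus ?thesis by (auto simp: Cl_def Sig_def)
    qed
    show "(-1) ^ p * quot_trace (cochains V E p) {0} (pullback V E p T) =
        (\<Sum>\<sigma>\<in>{\<sigma> \<in> Cl. card \<sigma> - 1 = p}. (-1) ^ (card \<sigma> - 1) * w \<sigma>)"
      unfolding eq chain_trace sum_distrib_left
      by (rule sum.cong) (auto simp: esig_map w_def Sig_def)
  qed
  also have "\<dots> = (\<Sum>\<sigma>\<in>Cl. (-1) ^ (card \<sigma> - 1) * w \<sigma>)"
  proof (rule sum.group[OF finCl finite_atMost])
    show "(\<lambda>\<sigma>. card \<sigma> - 1) ` Cl \<subseteq> {..N}"
    proof
      fix n assume "n \<in> (\<lambda>\<sigma>. card \<sigma> - 1) ` Cl"
      then obtain \<sigma> where \<sigma>: "clique V E \<sigma>" "n = card \<sigma> - 1" by (auto simp: Cl_def)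
      have "card \<sigma> \<le> card V" using \<sigma> finV[OF sg ge] by (intro card_mono) (auto simp: clique_def)
      thus "n \<in> {..N}" using \<sigma> by (simp add: N_def)
    qed
  qed
  also have "\<dots> = chi"
  proof -
    have e: "{\<sigma>. clique V E \<sigma> \<and> T ` \<sigma> = \<sigma>} = {\<sigma> \<in> Cl. T ` \<sigma> = \<sigma>}" by (auto simp: Cl_def)
    show ?thesis unfolding chi_def e sum.inter_filter[OF finCl] w_def
      by (rule sum.cong) auto
  qed
  finally show ?thesis .
qed

end


section \<open>Signs of permutations restricted to invariant sets\<close>

definition eps :: "('a \<Rightarrow> 'a) \<Rightarrow> 'a set \<Rightarrow> real" where
  "eps f U = (-1) ^ card U * real_of_int (sign_on U f)"

definition Inv :: "('a \<Rightarrow> 'a) \<Rightarrow> 'a set \<Rightarrow> 'a set set" where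
  "Inv f Y = {U. U \<subseteq> Y \<and> f ` U = U}"

lemma bij_inv: "finite U \<Longrightarrow> f ` U = U \<Longrightarrow> bij_betw f U U"
  unfolding bij_betw_def by (auto intro: eq_card_imp_inj_on)

lemma sign_cycle: "distinct cs \<Longrightarrow> sign (cycle_of_list cs) = (-1) ^ (length cs - 1)"
proof (induction cs rule: cycle_of_list.induct)
  case (1 i j cs)
  have "sign (cycle_of_list (i # j # cs)) = sign (Transposition.transpose i j) * sign (cycle_of_list (j # cs))"
    unfolding cycle_of_list.simps(1) by (rule sign_compose[OF permutation_swap_id permutation_of_cycle])
  from this 1 show ?case by (simp add: sign_swap_id del: cycle_of_list.simps)
qed simp_all

lemma sign_on_union:
  assumes fU: "finite U" and fO: "finite Ob" and d: "U \<inter> Ob = {}" and iU: "f ` U = U" and iO: "f ` Ob = Ob"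
  shows "sign_on (U \<union> Ob) f = sign_on U f * sign_on Ob f"
proof -
  have "restrict_id f (U \<union> Ob) = restrict_id f U \<circ> restrict_id f Ob"
  proof
    fix x show "restrict_id f (U \<union> Ob) x = (restrict_id f U \<circ> restrict_id f Ob) x"
    proof (cases "x \<in> Ob")
      case True
      hence "f x \<in> Ob" using iO by blast
      hence "f x \<notin> U" using d by blast
      thus ?thesis using True by simp
    next
      case False thus ?thesis by (cases "x \<in> U") auto
    qed
  qed
  moreover have "permutation (restrict_id f U)"
    using permutes_imp_permutation[OF fU permutes_restrict_id[OF bij_inv[OF fU iU]]] .
  moreover have "permutation (restrict_id f Ob)"
    using permutes_imp_permutation[OF fO permutes_restrict_id[OF bij_inv[OF fO iO]]] .
  ultimately show ?thesis by (simp add: sign_on_def sign_compose)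
qed

lemma eps_union:
  assumes fU: "finite U" and fO: "finite Ob" and d: "U \<inter> Ob = {}" and iU: "f ` U = U" and iO: "f ` Ob = Ob"
  shows "eps f (U \<union> Ob) = eps f U * eps f Ob"
  using sign_on_union[OF assms] card_Un_disjoint[OF fU fO d] by (simp add: eps_def power_add)

lemma eps_empty: "eps f {} = 1"
proof -
  have "restrict_id f {} = id" by (simp add: fun_eq_iff)
  thus ?thesis by (simp add: eps_def sign_on_def)
qed

lemma orbit:
  assumes fY: "finite Y" and iY: "f ` Y = Y" and y: "y \<in> Y"
  obtains Ob where "Ob \<subseteq> Y" "y \<in> Ob" "f ` Ob = Ob" "eps f Ob = -1"
     "\<And>U. U \<subseteq> Y \<Longrightarrow> f ` U = U \<Longrightarrow> U \<inter> Ob = {} \<or> Ob \<subseteq> U"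
proof -
  define p where "p = restrict_id f Y"
  have pY: "p permutes Y" unfolding p_def by (rule permutes_restrict_id[OF bij_inv[OF fY iY]])
  have pp: "permutation p" using permutes_imp_permutation[OF fY pY] .
  define cs where "cs = support p y"
  define Ob where "Ob = set cs"
  define L where "L = least_power p y"
  have L: "L > 0" "(p ^^ L) y = y" using least_power_of_permutation[OF pp] by (auto simp: L_def)
  have dcs: "distinct cs" unfolding cs_def by (rule cycle_of_permutation[OF pp])
  have Orange: "Ob = range (\<lambda>i. (p ^^ i) y)" unfolding Ob_def cs_def by (rule support_set[OF pp])
  have powY: "(p ^^ i) y \<in> Y" for i
    by (induction i) (auto simp: y permutes_in_image[OF pY])
  have OY: "Ob \<subseteq> Y" using powY Orange by auto
  have yO: "y \<in> Ob" using Orange by (metis funpow_0 rangeI)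
  have cyc: "restrict_id f Ob = cycle_of_list cs"
  proof
    fix x show "restrict_id f Ob x = cycle_of_list cs x"
    proof (cases "x \<in> Ob")
      case True
      hence "f x = p x" using OY by (auto simp: p_def)
      also have "\<dots> = cycle_of_list cs x" using cycle_restrict[OF pp, of x y] True by (simp add: Ob_def cs_def)
      finally show ?thesis using True by simp
    next
      case False thus ?thesis by (simp add: id_outside_supp Ob_def)
    qed
  qed
  have iO: "f ` Ob = Ob"
  proof -
    have "f ` Ob = restrict_id f Ob ` Ob" by auto
    also have "\<dots> = Ob" unfolding cyc unfolding Ob_def by (rule permutes_image[OF cycle_permutes])
    finally show ?thesis .
  qed
  have lcs: "length cs = L" by (simp add: cs_def L_def)
  have cO: "card Ob = L" using distinct_card[OF dcs] lcs by (simp add: Ob_def)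
  have eO: "eps f Ob = -1"
  proof -
    have "sign_on Ob f = (-1) ^ (L - 1)" using sign_cycle[OF dcs] cyc lcs by (simp add: sign_on_def)
    hence "eps f Ob = (-1) ^ L * (-1) ^ (L - 1)" by (simp add: eps_def cO)
    also have "\<dots> = (-1) ^ (L + (L - 1))" by (simp add: power_add)
    also have "L + (L - 1) = Suc (2 * (L - 1))" using L by simp
    finally show ?thesis by simp
  qed
  have cov: "U \<inter> Ob = {} \<or> Ob \<subseteq> U" if U: "U \<subseteq> Y" "f ` U = U" for U
  proof (cases "U \<inter> Ob = {}")
    case False
    then obtain i where i: "(p ^^ i) y \<in> U" using Orange by blast
    have pU: "p x \<in> U" if xU: "x \<in> U" for x
    proof -
      have "x \<in> Y" using xU U by blast
      hence "p x = f x" by (simp add: p_def)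
      thus ?thesis using xU U by blast
    qed
    have powU: "(p ^^ n) x \<in> U" if "x \<in> U" for x n
      using that by (induction n) (auto intro: pU)
    have "(p ^^ (L * i - i)) ((p ^^ i) y) = (p ^^ (L * i - i + i)) y" by (simp add: funpow_add)
    also have "L * i - i + i = L * i"
    proof -
      have "i \<le> L * i" using L(1) by (cases L) auto
      thus ?thesis by simp
    qed
    also have "(p ^^ (L * i)) y = y" using least_power_dvd[OF pp, of y "L * i"] by (simp add: L_def)
    finally have "y \<in> U" using powU[OF i, of "L * i - i"] by simp
    hence "Ob \<subseteq> U" using powU Orange by auto
    thus ?thesis by blast
  qed simp
  show ?thesis by (rule that[OF OY yO iO eO cov])
qed

lemma inv_diff: "finite Y \<Longrightarrow> f ` Y = Y \<Longrightarrow> U \<subseteq> Y \<Longrightarrow> f ` U = U \<Longrightarrow> f ` (Y - U) = Y - U"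
  using inj_on_image_set_diff[of f Y Y U] bij_inv[of Y f] by (auto simp: bij_betw_def)

lemma L1:
  assumes "finite Y" "f ` Y = Y"
  shows "(\<Sum>U\<in>Inv f Y. eps f U) = (if Y = {} then 1 else 0)"
  using assms
proof (induction "card Y" arbitrary: Y rule: less_induct)
  case less
  show ?case
  proof (cases "Y = {}")
    case True
    have "Inv f Y = {{}}" using True unfolding Inv_def by blast
    thus ?thesis using True by (simp add: eps_empty)
  next
    case False
    then obtain y where y: "y \<in> Y" by blast
    obtain Ob where Ob: "Ob \<subseteq> Y" "y \<in> Ob" "f ` Ob = Ob" "eps f Ob = -1"
      and cov: "\<And>U. U \<subseteq> Y \<Longrightarrow> f ` U = U \<Longrightarrow> U \<inter> Ob = {} \<or> Ob \<subseteq> U"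
      using orbit[OF less.prems y] by blast
    define Y' where "Y' = Y - Ob"
    have fY': "finite Y'" using less.prems by (simp add: Y'_def)
    have iY': "f ` Y' = Y'" unfolding Y'_def by (rule inv_diff[OF less.prems Ob(1,3)])
    have fO: "finite Ob" using Ob(1) less.prems(1) by (rule finite_subset)
    have cY': "card Y' < card Y" unfolding Y'_def using Ob less.prems(1) by (intro psubset_card_mono) auto
    have IH: "(\<Sum>U\<in>Inv f Y'. eps f U) = (if Y' = {} then 1 else 0)"
      using less.hyps[OF cY' fY' iY'] .
    have "Inv f Y' \<subseteq> Pow Y'" unfolding Inv_def by blast
    hence finI: "finite (Inv f Y')" using fY' by (rule finite_subset[OF _ finite_Pow_iff[THEN iffD2]])
    have split: "Inv f Y = Inv f Y' \<union> (\<lambda>U. U \<union> Ob) ` Inv f Y'"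
    proof
      show "Inv f Y \<subseteq> Inv f Y' \<union> (\<lambda>U. U \<union> Ob) ` Inv f Y'"
      proof
        fix U assume U: "U \<in> Inv f Y"
        hence UY: "U \<subseteq> Y" "f ` U = U" unfolding Inv_def by blast+
        show "U \<in> Inv f Y' \<union> (\<lambda>U. U \<union> Ob) ` Inv f Y'"
        proof (cases "U \<inter> Ob = {}")
          case True
          hence "U \<subseteq> Y'" using UY(1) unfolding Y'_def by blast
          hence "U \<in> Inv f Y'" using UY(2) unfolding Inv_def by blast
          thus ?thesis by blast
        next
          case False
          hence OU: "Ob \<subseteq> U" using cov[OF UY] by blast
          have fU: "finite U" using UY(1) less.prems(1) by (rule finite_subset)
          have "f ` (U - Ob) = U - Ob" by (rule inv_diff[OF fU UY(2) OU Ob(3)])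
          moreover have "U - Ob \<subseteq> Y'" using UY(1) unfolding Y'_def by blast
          ultimately have "U - Ob \<in> Inv f Y'" unfolding Inv_def by blast
          moreover have "U = (U - Ob) \<union> Ob" using OU by blast
          ultimately show ?thesis by blast
        qed
      qed
      show "Inv f Y' \<union> (\<lambda>U. U \<union> Ob) ` Inv f Y' \<subseteq> Inv f Y"
      proof
        fix X assume "X \<in> Inv f Y' \<union> (\<lambda>U. U \<union> Ob) ` Inv f Y'"
        thus "X \<in> Inv f Y"
        proof
          assume "X \<in> Inv f Y'"
          thus ?thesis unfolding Inv_def Y'_def by blast
        next
          assume "X \<in> (\<lambda>U. U \<union> Ob) ` Inv f Y'"
          then obtain U where U: "U \<subseteq> Y'" "f ` U = U" "X = U \<union> Ob" unfolding Inv_def by blast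
          have "f ` X = U \<union> Ob" using U Ob(3) by (simp add: image_Un)
          moreover have "X \<subseteq> Y" using U Ob(1) unfolding Y'_def by blast
          ultimately show ?thesis using U(3) unfolding Inv_def by blast
        qed
      qed
    qed
    have disj: "Inv f Y' \<inter> (\<lambda>U. U \<union> Ob) ` Inv f Y' = {}"
    proof -
      have "y \<notin> X" if "X \<in> Inv f Y'" for X using that Ob(2) unfolding Inv_def Y'_def by blast
      moreover have "y \<in> X" if "X \<in> (\<lambda>U. U \<union> Ob) ` Inv f Y'" for X using that Ob(2) by blast
      ultimately show ?thesis by blast
    qed
    have inj: "inj_on (\<lambda>U. U \<union> Ob) (Inv f Y')"
    proof (rule inj_onI)
      fix U1 U2 assume "U1 \<in> Inv f Y'" "U2 \<in> Inv f Y'" "U1 \<union> Ob = U2 \<union> Ob"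
      hence "U1 \<inter> Ob = {}" "U2 \<inter> Ob = {}" "U1 \<union> Ob = U2 \<union> Ob" unfolding Inv_def Y'_def by blast+
      thus "U1 = U2" by blast
    qed
    have finI2: "finite ((\<lambda>U. U \<union> Ob) ` Inv f Y')" using finI by simp
    have "(\<Sum>U\<in>Inv f Y. eps f U) = (\<Sum>U\<in>Inv f Y'. eps f U) + (\<Sum>U\<in>(\<lambda>U. U \<union> Ob) ` Inv f Y'. eps f U)"
      unfolding split by (rule sum.union_disjoint[OF finI finI2 disj])
    also have "(\<Sum>U\<in>(\<lambda>U. U \<union> Ob) ` Inv f Y'. eps f U) = (\<Sum>U\<in>Inv f Y'. eps f (U \<union> Ob))"
      by (rule sum.reindex[OF inj, unfolded comp_def])
    also have "(\<Sum>U\<in>Inv f Y'. eps f (U \<union> Ob)) = (\<Sum>U\<in>Inv f Y'. - eps f U)"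
    proof (rule sum.cong[OF refl])
      fix U assume "U \<in> Inv f Y'"
      hence "U \<subseteq> Y'" "f ` U = U" by (auto simp: Inv_def)
      moreover hence "finite U" using fY' by (auto intro: finite_subset)
      ultimately show "eps f (U \<union> Ob) = - eps f U"
        using eps_union[of U Ob f] fO Ob(3,4) by (auto simp: Y'_def)
    qed
    finally show ?thesis using False by (simp add: sum_negf)
  qed
qed

lemma L2:
  assumes fA: "finite A" and iA: "f ` A = A" and ZA: "Z \<subseteq> A" and iZ: "f ` Z = Z"
  shows "(\<Sum>A'\<in>{A' \<in> Inv f A. Z \<subseteq> A'}. eps f (A - A')) = (if Z = A then 1 else 0)"
proof -
  have "(\<Sum>A'\<in>{A' \<in> Inv f A. Z \<subseteq> A'}. eps f (A - A')) = (\<Sum>U\<in>Inv f (A - Z). eps f U)"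
  proof (rule sum.reindex_bij_betw)
    show "bij_betw (\<lambda>A'. A - A') {A' \<in> Inv f A. Z \<subseteq> A'} (Inv f (A - Z))"
    proof (rule bij_betw_byWitness[where f' = "\<lambda>U. A - U"])
      show "\<forall>a\<in>{A' \<in> Inv f A. Z \<subseteq> A'}. A - (A - a) = a" unfolding Inv_def by blast
      show "\<forall>a'\<in>Inv f (A - Z). A - (A - a') = a'" unfolding Inv_def by blast
      show "(\<lambda>A'. A - A') ` {A' \<in> Inv f A. Z \<subseteq> A'} \<subseteq> Inv f (A - Z)"
      proof
        fix X assume "X \<in> (\<lambda>A'. A - A') ` {A' \<in> Inv f A. Z \<subseteq> A'}"
        then obtain A' where A': "A' \<subseteq> A" "f ` A' = A'" "Z \<subseteq> A'" "X = A - A'" unfolding Inv_def by blast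
        have "f ` (A - A') = A - A'" by (rule inv_diff[OF fA iA A'(1,2)])
        moreover have "A - A' \<subseteq> A - Z" using A'(3) by blast
        ultimately show "X \<in> Inv f (A - Z)" using A'(4) unfolding Inv_def by blast
      qed
      show "(\<lambda>U. A - U) ` Inv f (A - Z) \<subseteq> {A' \<in> Inv f A. Z \<subseteq> A'}"
      proof
        fix X assume "X \<in> (\<lambda>U. A - U) ` Inv f (A - Z)"
        then obtain U where U: "U \<subseteq> A - Z" "f ` U = U" "X = A - U" unfolding Inv_def by blast
        have "U \<subseteq> A" using U(1) by blast
        hence "f ` (A - U) = A - U" by (rule inv_diff[OF fA iA _ U(2)])
        moreover have "A - U \<subseteq> A" "Z \<subseteq> A - U" using U(1) ZA by blast+
        ultimately show "X \<in> {A' \<in> Inv f A. Z \<subseteq> A'}" using U(3) unfolding Inv_def by blast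
      qed
    qed
  qed
  also have "\<dots> = (if A - Z = {} then 1 else 0)"
  proof (rule L1)
    show "finite (A - Z)" using fA by simp
    show "f ` (A - Z) = A - Z" by (rule inv_diff[OF fA iA ZA iZ])
  qed
  also have "(A - Z = {}) = (Z = A)" using ZA by blast
  finally show ?thesis .
qed


section \<open>Moebius inversion on invariant subsets and the product formula\<close>

lemma finite_Inv: "finite Y \<Longrightarrow> finite (Inv f Y)"
proof -
  assume "finite Y"
  moreover have "Inv f Y \<subseteq> Pow Y" unfolding Inv_def by blast
  ultimately show ?thesis by (meson finite_Pow_iff finite_subset)
qed

lemma Inv_sub: "A' \<in> Inv f A \<Longrightarrow> Inv f A' = {A'' \<in> Inv f A. A'' \<subseteq> A'}"
  unfolding Inv_def by blast

lemma M1: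
  assumes fA: "finite A" and iA: "f ` A = A"
  shows "(\<Sum>A'\<in>Inv f A. eps f (A - A') * (\<Sum>A''\<in>{A'' \<in> Inv f A. A'' \<subseteq> A'}. h A'')) = h A"
proof -
  have fI: "finite (Inv f A)" using fA by (rule finite_Inv)
  have "(\<Sum>A'\<in>Inv f A. eps f (A - A') * (\<Sum>A''\<in>{A'' \<in> Inv f A. A'' \<subseteq> A'}. h A''))
      = (\<Sum>A'\<in>Inv f A. \<Sum>A''\<in>{A'' \<in> Inv f A. A'' \<subseteq> A'}. eps f (A - A') * h A'')"
    by (simp add: sum_distrib_left)
  also have "\<dots> = (\<Sum>A''\<in>Inv f A. \<Sum>A'\<in>{A' \<in> Inv f A. A'' \<subseteq> A'}. eps f (A - A') * h A'')"
    by (rule sum.swap_restrict[OF fI fI])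
  also have "\<dots> = (\<Sum>A''\<in>Inv f A. (if A'' = A then 1 else 0) * h A'')"
  proof (rule sum.cong[OF refl])
    fix A'' assume "A'' \<in> Inv f A"
    hence A'': "A'' \<subseteq> A" "f ` A'' = A''" unfolding Inv_def by blast+
    have "(\<Sum>A'\<in>{A' \<in> Inv f A. A'' \<subseteq> A'}. eps f (A - A') * h A'') =
        (\<Sum>A'\<in>{A' \<in> Inv f A. A'' \<subseteq> A'}. eps f (A - A')) * h A''"
      by (simp add: sum_distrib_right)
    also have "\<dots> = (if A'' = A then 1 else 0) * h A''" using L2[OF fA iA A''] by simp
    finally show "(\<Sum>A'\<in>{A' \<in> Inv f A. A'' \<subseteq> A'}. eps f (A - A') * h A'') = (if A'' = A then 1 else 0) * h A''" .
  qed
  also have "\<dots> = h A"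
  proof -
    have "A \<in> Inv f A" using iA unfolding Inv_def by blast
    thus ?thesis using fI by (simp add: if_distrib[of "\<lambda>x. x * h _"] sum.delta' cong: if_cong)
  qed
  finally show ?thesis .
qed

definition Cov :: "('a \<Rightarrow> 'a) \<Rightarrow> ('b \<Rightarrow> 'b) \<Rightarrow> 'a set \<Rightarrow> 'b set \<Rightarrow> ('a \<times> 'b) set set" where
  "Cov T S A B = {X. X \<subseteq> A \<times> B \<and> map_prod T S ` X = X \<and> fst ` X = A \<and> snd ` X = B}"

lemma fst_inv: "map_prod T S ` X = X \<Longrightarrow> T ` (fst ` X) = fst ` X"
proof -
  assume h: "map_prod T S ` X = X"
  have "fst ` (map_prod T S ` X) = T ` (fst ` X)" by (simp add: image_image)
  thus ?thesis using h by simp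
qed

lemma snd_inv: "map_prod T S ` X = X \<Longrightarrow> S ` (snd ` X) = snd ` X"
proof -
  assume h: "map_prod T S ` X = X"
  have "snd ` (map_prod T S ` X) = S ` (snd ` X)" by (simp add: image_image)
  thus ?thesis using h by simp
qed

lemma F_val:
  assumes "finite A'" "finite B'" "T ` A' = A'" "S ` B' = B'"
  shows "(\<Sum>X\<in>Inv (map_prod T S) (A' \<times> B'). eps (map_prod T S) X) = (if A' = {} \<or> B' = {} then 1 else 0)"
proof -
  have "map_prod T S ` (A' \<times> B') = A' \<times> B'" using assms by (simp add: map_prod_surj_on)
  from L1[OF _ this] assms show ?thesis by simp
qed

lemma F_group:
  assumes fA: "finite A'" and fB: "finite B'"
  shows "(\<Sum>X\<in>Inv (map_prod T S) (A' \<times> B'). eps (map_prod T S) X) =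
    (\<Sum>A''\<in>Inv T A'. \<Sum>B''\<in>Inv S B'. \<Sum>X\<in>Cov T S A'' B''. eps (map_prod T S) X)"
proof -
  let ?P = "map_prod T S"
  let ?I = "Inv ?P (A' \<times> B')"
  let ?g = "\<lambda>X. (fst ` X, snd ` X)"
  have fI: "finite ?I" using fA fB by (intro finite_Inv) simp
  have fJ: "finite (Inv T A' \<times> Inv S B')" using fA fB by (simp add: finite_Inv)
  have gI: "?g ` ?I \<subseteq> Inv T A' \<times> Inv S B'"
  proof
    fix y assume "y \<in> ?g ` ?I"
    then obtain X where X: "X \<subseteq> A' \<times> B'" "?P ` X = X" "y = ?g X" unfolding Inv_def by blast
    have "fst ` X \<subseteq> A'" "snd ` X \<subseteq> B'" using X(1) by auto
    thus "y \<in> Inv T A' \<times> Inv S B'" using fst_inv[OF X(2)] snd_inv[OF X(2)] X(3) unfolding Inv_def by blast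
  qed
  have "(\<Sum>X\<in>?I. eps ?P X) = (\<Sum>y\<in>Inv T A' \<times> Inv S B'. \<Sum>X\<in>{X. X \<in> ?I \<and> ?g X = y}. eps ?P X)"
    by (rule sum.group[OF fI fJ gI, symmetric])
  also have "\<dots> = (\<Sum>A''\<in>Inv T A'. \<Sum>B''\<in>Inv S B'. \<Sum>X\<in>{X. X \<in> ?I \<and> ?g X = (A'', B'')}. eps ?P X)"
    by (rule sum.cartesian_product')
  also have "\<dots> = (\<Sum>A''\<in>Inv T A'. \<Sum>B''\<in>Inv S B'. \<Sum>X\<in>Cov T S A'' B''. eps ?P X)"
  proof (intro sum.cong refl)
    fix A'' B'' assume A'': "A'' \<in> Inv T A'" and B'': "B'' \<in> Inv S B'"
    show "{X. X \<in> ?I \<and> ?g X = (A'', B'')} = Cov T S A'' B''"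
    proof
      show "{X. X \<in> ?I \<and> ?g X = (A'', B'')} \<subseteq> Cov T S A'' B''"
      proof
        fix X assume "X \<in> {X. X \<in> ?I \<and> ?g X = (A'', B'')}"
        hence X: "?P ` X = X" "fst ` X = A''" "snd ` X = B''" unfolding Inv_def by auto
        have "X \<subseteq> A'' \<times> B''"
        proof
          fix x assume "x \<in> X"
          hence "fst x \<in> A''" "snd x \<in> B''" using X(2,3) by blast+
          thus "x \<in> A'' \<times> B''" by (cases x) simp
        qed
        thus "X \<in> Cov T S A'' B''" using X unfolding Cov_def by blast
      qed
      show "Cov T S A'' B'' \<subseteq> {X. X \<in> ?I \<and> ?g X = (A'', B'')}"
      proof
        fix X assume "X \<in> Cov T S A'' B''"
        hence X: "X \<subseteq> A'' \<times> B''" "?P ` X = X" "fst ` X = A''" "snd ` X = B''" unfolding Cov_def by blast+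
        have "A'' \<subseteq> A'" "B'' \<subseteq> B'" using A'' B'' unfolding Inv_def by blast+
        hence "X \<subseteq> A' \<times> B'" using X(1) by blast
        thus "X \<in> {X. X \<in> ?I \<and> ?g X = (A'', B'')}" using X unfolding Inv_def by blast
      qed
    qed
  qed
  finally show ?thesis .
qed


lemma Sfun_formula:
  assumes fA: "finite A" and fB: "finite B" and iA: "T ` A = A" and iB: "S ` B = B"
  shows "(\<Sum>X\<in>Cov T S A B. eps (map_prod T S) X) =
    (\<Sum>A'\<in>Inv T A. \<Sum>B'\<in>Inv S B. eps T (A - A') * eps S (B - B') *
        (\<Sum>X\<in>Inv (map_prod T S) (A' \<times> B'). eps (map_prod T S) X))"
proof -
  define s where "s = (\<lambda>A'' B''. \<Sum>X\<in>Cov T S A'' B''. eps (map_prod T S) X)"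
  define IA where "IA = Inv T A"
  define IB where "IB = Inv S B"
  have "(\<Sum>A'\<in>IA. \<Sum>B'\<in>IB. eps T (A - A') * eps S (B - B') *
        (\<Sum>X\<in>Inv (map_prod T S) (A' \<times> B'). eps (map_prod T S) X)) =
      (\<Sum>A'\<in>IA. \<Sum>B'\<in>IB. eps T (A - A') * eps S (B - B') *
        (\<Sum>A''\<in>{A'' \<in> IA. A'' \<subseteq> A'}. \<Sum>B''\<in>{B'' \<in> IB. B'' \<subseteq> B'}. s A'' B''))"
  proof (intro sum.cong refl)
    fix A' B' assume A': "A' \<in> IA" and B': "B' \<in> IB"
    have "finite A'" "finite B'" using A' B' fA fB unfolding IA_def IB_def Inv_def by (auto intro: finite_subset)
    thus "eps T (A - A') * eps S (B - B') * (\<Sum>X\<in>Inv (map_prod T S) (A' \<times> B'). eps (map_prod T S) X) =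
        eps T (A - A') * eps S (B - B') * (\<Sum>A''\<in>{A'' \<in> IA. A'' \<subseteq> A'}. \<Sum>B''\<in>{B'' \<in> IB. B'' \<subseteq> B'}. s A'' B'')"
      using F_group[of A' B' T S] Inv_sub[of A' T A] Inv_sub[of B' S B] A' B'
      by (simp add: s_def IA_def IB_def)
  qed
  also have "\<dots> = (\<Sum>A'\<in>IA. eps T (A - A') * (\<Sum>A''\<in>{A'' \<in> IA. A'' \<subseteq> A'}.
        \<Sum>B'\<in>IB. eps S (B - B') * (\<Sum>B''\<in>{B'' \<in> IB. B'' \<subseteq> B'}. s A'' B'')))"
  proof (rule sum.cong[OF refl])
    fix A'
    have "(\<Sum>B'\<in>IB. eps T (A - A') * eps S (B - B') *
        (\<Sum>A''\<in>{A'' \<in> IA. A'' \<subseteq> A'}. \<Sum>B''\<in>{B'' \<in> IB. B'' \<subseteq> B'}. s A'' B'')) =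
      (\<Sum>B'\<in>IB. \<Sum>A''\<in>{A'' \<in> IA. A'' \<subseteq> A'}. eps T (A - A') * (eps S (B - B') *
        (\<Sum>B''\<in>{B'' \<in> IB. B'' \<subseteq> B'}. s A'' B'')))"
      by (simp add: sum_distrib_left mult.assoc)
    also have "\<dots> = (\<Sum>A''\<in>{A'' \<in> IA. A'' \<subseteq> A'}. \<Sum>B'\<in>IB. eps T (A - A') * (eps S (B - B') *
        (\<Sum>B''\<in>{B'' \<in> IB. B'' \<subseteq> B'}. s A'' B'')))"
      by (rule sum.swap)
    also have "\<dots> = eps T (A - A') * (\<Sum>A''\<in>{A'' \<in> IA. A'' \<subseteq> A'}.
        \<Sum>B'\<in>IB. eps S (B - B') * (\<Sum>B''\<in>{B'' \<in> IB. B'' \<subseteq> B'}. s A'' B''))"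
      by (simp add: sum_distrib_left)
    finally show "(\<Sum>B'\<in>IB. eps T (A - A') * eps S (B - B') *
        (\<Sum>A''\<in>{A'' \<in> IA. A'' \<subseteq> A'}. \<Sum>B''\<in>{B'' \<in> IB. B'' \<subseteq> B'}. s A'' B'')) =
      eps T (A - A') * (\<Sum>A''\<in>{A'' \<in> IA. A'' \<subseteq> A'}.
        \<Sum>B'\<in>IB. eps S (B - B') * (\<Sum>B''\<in>{B'' \<in> IB. B'' \<subseteq> B'}. s A'' B''))" .
  qed
  also have "\<dots> = (\<Sum>A'\<in>IA. eps T (A - A') * (\<Sum>A''\<in>{A'' \<in> IA. A'' \<subseteq> A'}. s A'' B))"
    unfolding IB_def using M1[OF fB iB] by simp
  also have "\<dots> = s A B"
    unfolding IA_def by (rule M1[OF fA iA])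
  finally show ?thesis by (simp add: s_def IA_def IB_def)
qed

lemma Sfun_value:
  assumes fA: "finite A" and fB: "finite B" and iA: "T ` A = A" and iB: "S ` B = B"
    and nA: "A \<noteq> {}" and nB: "B \<noteq> {}"
  shows "(\<Sum>X\<in>Cov T S A B. eps (map_prod T S) X) = - eps T A * eps S B"
proof -
  define IA where "IA = Inv T A"
  define IB where "IB = Inv S B"
  have fIA: "finite IA" and fIB: "finite IB" using fA fB by (simp_all add: IA_def IB_def finite_Inv)
  have eA: "{} \<in> IA" and eB: "{} \<in> IB" by (auto simp: IA_def IB_def Inv_def)
  have zA: "(\<Sum>A'\<in>IA. eps T (A - A')) = 0"
    using L2[OF fA iA, of "{}"] nA by (simp add: IA_def)
  have zB: "(\<Sum>B'\<in>IB. eps S (B - B')) = 0"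
    using L2[OF fB iB, of "{}"] nB by (simp add: IB_def)
  have inner: "(\<Sum>B'\<in>IB. eps T (A - A') * eps S (B - B') *
       (\<Sum>X\<in>Inv (map_prod T S) (A' \<times> B'). eps (map_prod T S) X)) =
      eps T (A - A') * (if A' = {} then 0 else eps S B)" if A': "A' \<in> IA" for A'
  proof -
    have fA': "finite A'" "T ` A' = A'" using A' fA unfolding IA_def Inv_def by (auto intro: finite_subset)
    have "(\<Sum>B'\<in>IB. eps T (A - A') * eps S (B - B') *
       (\<Sum>X\<in>Inv (map_prod T S) (A' \<times> B'). eps (map_prod T S) X)) =
       (\<Sum>B'\<in>IB. eps T (A - A') * (eps S (B - B') * (if A' = {} \<or> B' = {} then 1 else 0)))"
    proof (rule sum.cong[OF refl])
      fix B' assume "B' \<in> IB"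
      hence fB': "finite B'" "S ` B' = B'" using fB unfolding IB_def Inv_def by (auto intro: finite_subset)
      show "eps T (A - A') * eps S (B - B') * (\<Sum>X\<in>Inv (map_prod T S) (A' \<times> B'). eps (map_prod T S) X) =
          eps T (A - A') * (eps S (B - B') * (if A' = {} \<or> B' = {} then 1 else 0))"
        unfolding F_val[OF fA'(1) fB'(1) fA'(2) fB'(2)] by simp
    qed
    also have "\<dots> = eps T (A - A') * (\<Sum>B'\<in>IB. eps S (B - B') * (if A' = {} \<or> B' = {} then 1 else 0))"
      by (simp add: sum_distrib_left)
    also have "(\<Sum>B'\<in>IB. eps S (B - B') * (if A' = {} \<or> B' = {} then 1 else 0)) = (if A' = {} then 0 else eps S B)"
    proof (cases "A' = {}")
      case True thus ?thesis using zB by simp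
    next
      case False
      have "(\<Sum>B'\<in>IB. eps S (B - B') * (if A' = {} \<or> B' = {} then 1 else 0)) =
          (\<Sum>B'\<in>IB. if B' = {} then eps S (B - B') else 0)"
        using False by (intro sum.cong) auto
      also have "\<dots> = eps S B" using fIB eB by simp
      finally show ?thesis using False by simp
    qed
    finally show ?thesis .
  qed
  have "(\<Sum>X\<in>Cov T S A B. eps (map_prod T S) X) = (\<Sum>A'\<in>IA. eps T (A - A') * (if A' = {} then 0 else eps S B))"
    unfolding Sfun_formula[OF fA fB iA iB] IA_def[symmetric] IB_def[symmetric] using inner by (intro sum.cong) auto
  also have "\<dots> = (\<Sum>A'\<in>IA. eps T (A - A') * eps S B - (if A' = {} then eps T (A - A') * eps S B else 0))"
    by (intro sum.cong) auto
  also have "\<dots> = (\<Sum>A'\<in>IA. eps T (A - A')) * eps S B - eps T A * eps S B"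
    using fIA eA by (simp add: sum_subtractf sum_distrib_right)
  finally show ?thesis using zA by simp
qed


lemma clique_card: "finite V \<Longrightarrow> clique V E \<sigma> \<Longrightarrow> finite \<sigma> \<and> card \<sigma> \<ge> 1"
proof -
  assume "finite V" "clique V E \<sigma>"
  hence "finite \<sigma>" "\<sigma> \<noteq> {}" by (auto simp: clique_def intro: finite_subset)
  thus ?thesis by (simp add: Suc_le_eq card_gt_0_iff)
qed

lemma chi_eps:
  assumes fV: "finite V" and ge: "graph_endo V E T"
  shows "chi V E T = (\<Sum>\<sigma>\<in>{\<sigma>. clique V E \<sigma> \<and> T ` \<sigma> = \<sigma>}. - eps T \<sigma>)"
  unfolding chi_def[OF fV ge]
proof (rule sum.cong[OF refl])
  fix \<sigma> assume "\<sigma> \<in> {\<sigma>. clique V E \<sigma> \<and> T ` \<sigma> = \<sigma>}"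
  hence c: "card \<sigma> \<ge> 1" using clique_card[OF fV] by blast
  have "(-1::real) ^ card \<sigma> = (-1) ^ Suc (card \<sigma> - 1)" using c by simp
  thus "(-1) ^ (card \<sigma> - 1) * real_of_int (sign_on \<sigma> T) = - eps T \<sigma>"
    by (simp add: eps_def)
qed

lemma clique_prod:
  "clique (V \<times> W) (strong_prod E F) X \<longleftrightarrow> clique V E (fst ` X) \<and> clique W F (snd ` X)"
proof
  assume c: "clique (V \<times> W) (strong_prod E F) X"
  hence X: "X \<noteq> {}" "X \<subseteq> V \<times> W" "\<And>x y. x \<in> X \<Longrightarrow> y \<in> X \<Longrightarrow> x \<noteq> y \<Longrightarrow> strong_prod E F x y"
    unfolding clique_def by blast+
  have "E a c" if ac: "a \<in> fst ` X" "c \<in> fst ` X" "a \<noteq> c" for a c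
  proof -
    obtain b d where bd: "(a, b) \<in> X" "(c, d) \<in> X" using ac(1,2) by force
    hence "strong_prod E F (a, b) (c, d)" using X(3) ac(3) by blast
    thus ?thesis using ac(3) by (simp add: strong_prod_def)
  qed
  moreover have "F b d" if bd: "b \<in> snd ` X" "d \<in> snd ` X" "b \<noteq> d" for b d
  proof -
    obtain a c where ac: "(a, b) \<in> X" "(c, d) \<in> X" using bd(1,2) by force
    hence "strong_prod E F (a, b) (c, d)" using X(3) bd(3) by blast
    thus ?thesis using bd(3) by (simp add: strong_prod_def)
  qed
  moreover have "fst ` X \<noteq> {}" "snd ` X \<noteq> {}" "fst ` X \<subseteq> V" "snd ` X \<subseteq> W" using X(1,2) by auto
  ultimately show "clique V E (fst ` X) \<and> clique W F (snd ` X)" unfolding clique_def by blast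
next
  assume c: "clique V E (fst ` X) \<and> clique W F (snd ` X)"
  hence A: "fst ` X \<noteq> {}" "fst ` X \<subseteq> V" "\<And>a c. a \<in> fst ` X \<Longrightarrow> c \<in> fst ` X \<Longrightarrow> a \<noteq> c \<Longrightarrow> E a c"
    and B: "snd ` X \<subseteq> W" "\<And>b d. b \<in> snd ` X \<Longrightarrow> d \<in> snd ` X \<Longrightarrow> b \<noteq> d \<Longrightarrow> F b d"
    unfolding clique_def by blast+
  have "X \<noteq> {}" using A(1) by auto
  moreover have "X \<subseteq> V \<times> W"
  proof
    fix x assume "x \<in> X"
    hence "fst x \<in> V" "snd x \<in> W" using A(2) B(1) by blast+
    thus "x \<in> V \<times> W" by (cases x) simp
  qed
  moreover have "strong_prod E F x y" if xyX: "x \<in> X" "y \<in> X" "x \<noteq> y" for x y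
  proof -
    obtain a b c d where xy: "x = (a, b)" "y = (c, d)" by (cases x, cases y) auto
    have "a \<in> fst ` X" "c \<in> fst ` X" "b \<in> snd ` X" "d \<in> snd ` X" using xyX xy by force+
    hence "a = c \<or> E a c" "b = d \<or> F b d" using A(3) B(2) by blast+
    thus ?thesis using xy xyX(3) by (simp add: strong_prod_def)
  qed
  ultimately show "clique (V \<times> W) (strong_prod E F) X" unfolding clique_def by blast
qed

lemma endo_prod:
  assumes T: "graph_endo V E T" and S: "graph_endo W F S"
  shows "graph_endo (V \<times> W) (strong_prod E F) (map_prod T S)"
  unfolding graph_endo_def
proof (intro conjI ballI impI)
  show "map_prod T S ` (V \<times> W) \<subseteq> V \<times> W" using T S by (auto simp: graph_endo_def)
  fix u v assume u: "u \<in> V \<times> W" and v: "v \<in> V \<times> W" and e: "strong_prod E F u v"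
  obtain a b c d where uv: "u = (a, b)" "v = (c, d)" by (cases u, cases v) auto
  have ac: "a \<in> V" "c \<in> V" "b \<in> W" "d \<in> W" using u v uv by auto
  have "a = c \<or> E a c" "b = d \<or> F b d" using e uv by (auto simp: strong_prod_def)
  hence "T a = T c \<or> E (T a) (T c)" "S b = S d \<or> F (S b) (S d)"
    using T S ac unfolding graph_endo_def by blast+
  thus "map_prod T S u = map_prod T S v \<or> strong_prod E F (map_prod T S u) (map_prod T S v)"
    using uv by (auto simp: strong_prod_def)
qed

lemma chi_prod:
  assumes fV: "finite V" and fW: "finite W" and T: "graph_endo V E T" and S: "graph_endo W F S"
  shows "chi (V \<times> W) (strong_prod E F) (map_prod T S) = chi V E T * chi W F S"
proof -
  let ?P = "map_prod T S"
  let ?G = "strong_prod E F"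
  define FT where "FT = {A. clique V E A \<and> T ` A = A}"
  define FS where "FS = {B. clique W F B \<and> S ` B = B}"
  define FP where "FP = {X. clique (V \<times> W) ?G X \<and> ?P ` X = X}"
  have fVW: "finite (V \<times> W)" using fV fW by simp
  have fFP: "finite FP"
  proof -
    have "FP \<subseteq> Pow (V \<times> W)" by (auto simp: FP_def clique_def)
    thus ?thesis using fVW by (meson finite_Pow_iff finite_subset)
  qed
  have fFT: "finite FT"
  proof -
    have "FT \<subseteq> Pow V" by (auto simp: FT_def clique_def)
    thus ?thesis using fV by (meson finite_Pow_iff finite_subset)
  qed
  have fFS: "finite FS"
  proof -
    have "FS \<subseteq> Pow W" by (auto simp: FS_def clique_def)
    thus ?thesis using fW by (meson finite_Pow_iff finite_subset)
  qed
  let ?g = "\<lambda>X. (fst ` X, snd ` X)"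
  have gP: "?g ` FP \<subseteq> FT \<times> FS"
  proof
    fix y assume "y \<in> ?g ` FP"
    then obtain X where X: "X \<in> FP" "y = ?g X" by blast
    hence cX: "clique (V \<times> W) ?G X" and iX: "?P ` X = X" unfolding FP_def by blast+
    have "clique V E (fst ` X) \<and> clique W F (snd ` X)" using cX by (rule clique_prod[THEN iffD1])
    moreover have "T ` (fst ` X) = fst ` X" "S ` (snd ` X) = snd ` X" using fst_inv[OF iX] snd_inv[OF iX] .
    ultimately have "fst ` X \<in> FT" "snd ` X \<in> FS" unfolding FT_def FS_def by blast+
    thus "y \<in> FT \<times> FS" using X(2) by simp
  qed
  have "chi (V \<times> W) ?G ?P = (\<Sum>X\<in>FP. - eps ?P X)"
    unfolding FP_def by (rule chi_eps[OF fVW endo_prod[OF T S]])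
  also have "\<dots> = (\<Sum>y\<in>FT \<times> FS. \<Sum>X\<in>{X. X \<in> FP \<and> ?g X = y}. - eps ?P X)"
    by (rule sum.group[OF fFP _ gP, symmetric]) (simp add: fFT fFS)
  also have "\<dots> = (\<Sum>A\<in>FT. \<Sum>B\<in>FS. \<Sum>X\<in>{X. X \<in> FP \<and> ?g X = (A, B)}. - eps ?P X)"
    by (rule sum.cartesian_product')
  also have "\<dots> = (\<Sum>A\<in>FT. \<Sum>B\<in>FS. eps T A * eps S B)"
  proof (intro sum.cong refl)
    fix A B assume A: "A \<in> FT" and B: "B \<in> FS"
    have cA: "clique V E A" "T ` A = A" using A unfolding FT_def by blast+
    have cB: "clique W F B" "S ` B = B" using B unfolding FS_def by blast+
    have fA: "finite A" "A \<noteq> {}" using clique_card[OF fV cA(1)] cA(1) unfolding clique_def by blast+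
    have fB: "finite B" "B \<noteq> {}" using clique_card[OF fW cB(1)] cB(1) unfolding clique_def by blast+
    have eq: "{X. X \<in> FP \<and> ?g X = (A, B)} = Cov T S A B"
    proof
      show "{X. X \<in> FP \<and> ?g X = (A, B)} \<subseteq> Cov T S A B"
      proof
        fix X assume "X \<in> {X. X \<in> FP \<and> ?g X = (A, B)}"
        hence X: "?P ` X = X" "fst ` X = A" "snd ` X = B" unfolding FP_def by auto
        have "X \<subseteq> A \<times> B"
        proof
          fix x assume "x \<in> X"
          hence "fst x \<in> A" "snd x \<in> B" using X(2,3) by blast+
          thus "x \<in> A \<times> B" by (cases x) simp
        qed
        thus "X \<in> Cov T S A B" using X unfolding Cov_def by blast
      qed
      show "Cov T S A B \<subseteq> {X. X \<in> FP \<and> ?g X = (A, B)}"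
      proof
        fix X assume "X \<in> Cov T S A B"
        hence X: "?P ` X = X" "fst ` X = A" "snd ` X = B" unfolding Cov_def by blast+
        hence "clique (V \<times> W) ?G X" using cA(1) cB(1) by (intro clique_prod[THEN iffD2]) simp
        thus "X \<in> {X. X \<in> FP \<and> ?g X = (A, B)}" using X unfolding FP_def by blast
      qed
    qed
    have "(\<Sum>X\<in>Cov T S A B. - eps ?P X) = - (\<Sum>X\<in>Cov T S A B. eps ?P X)" by (simp add: sum_negf)
    also have "\<dots> = eps T A * eps S B" using Sfun_value[OF fA(1) fB(1) cA(2) cB(2) fA(2) fB(2)] by simp
    finally show "(\<Sum>X\<in>{X. X \<in> FP \<and> ?g X = (A, B)}. - eps ?P X) = eps T A * eps S B" unfolding eq .
  qed
  also have "\<dots> = (\<Sum>A\<in>FT. - eps T A) * (\<Sum>B\<in>FS. - eps S B)"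
    by (simp add: sum_product)
  also have "\<dots> = chi V E T * chi W F S"
    using chi_eps[OF fV T] chi_eps[OF fW S] by (simp add: FT_def FS_def)
  finally show ?thesis .
qed

theorem mainTheorem6:
  fixes V :: "'a set" and E :: "'a \<Rightarrow> 'a \<Rightarrow> bool" and T :: "'a \<Rightarrow> 'a"
    and W :: "'b set" and F :: "'b \<Rightarrow> 'b \<Rightarrow> bool" and S :: "'b \<Rightarrow> 'b"
  assumes "simple_graph V E" and "simple_graph W F"
    and "graph_endo V E T" and "graph_endo W F S"
  shows "graph_endo (V \<times> W) (strong_prod E F) (\<lambda>(v, w). (T v, S w))
    \<and> lefschetz (V \<times> W) (strong_prod E F) (\<lambda>(v, w). (T v, S w))
        = lefschetz V E T * lefschetz W F S"
proof -
  have P: "(\<lambda>(v, w). (T v, S w)) = map_prod T S" by (auto simp: fun_eq_iff)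
  have fV: "finite V" and fW: "finite W" using assms(1,2) by (simp_all add: simple_graph_def)
  have ge: "graph_endo (V \<times> W) (strong_prod E F) (map_prod T S)" by (rule endo_prod[OF assms(3,4)])
  have "lefschetz (V \<times> W) (strong_prod E F) (map_prod T S) = chi (V \<times> W) (strong_prod E F) (map_prod T S)"
    using lefschetz_chi[OF _ ge] fV fW by simp
  also have "\<dots> = chi V E T * chi W F S" by (rule chi_prod[OF fV fW assms(3,4)])
  also have "\<dots> = lefschetz V E T * lefschetz W F S"
    using lefschetz_chi[OF fV assms(3)] lefschetz_chi[OF fW assms(4)] by simp
  finally show ?thesis using ge P by simp
qed


end
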